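(* Let $T:M_d\to M_d$ be completely positive with $T(I)\le I$, and assume $T$ belongs to a finite set $A$ of positive subunital maps on $M_d$ that is closed under composition. Then $n_T\le d$. More precisely, if $n=n_T$ and \[ Q=\bigvee_{k=0}^{n-1}\mathrm{supp}(T^k(d(T))),\qquad s=\mathrm{rank}(Q), \] then $n_T\le s\le d$.
   Context: $M_d$ is the algebra of complex $d\times d$ matrices ordered by positive semidefiniteness, with unit $I$. A map is positive if it preserves positive semidefiniteness and subunital if $T(I)\le I$. The defect is $d(T)=I-T(I)$, the stabilization index is $n_T=\min\{n\ge1: T^n(d(T))=0\}$ (with $T^0=\mathrm{id}$). For positive semidefinite $x$, $\mathrm{supp}(x)$ is the orthogonal projection onto the range of $x$. *)

theory Defs
  imports "Jordan_Normal_Form.Schur_Decomposition" "Jordan_Normal_Form.DL_Rank"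
begin

definition psd :: "nat \<Rightarrow> complex mat \<Rightarrow> bool" where
  "psd n A \<longleftrightarrow> A \<in> carrier_mat n n \<and> mat_adjoint A = A \<and>
     (\<forall>v \<in> carrier_vec n. 0 \<le> Re ((A *\<^sub>v v) \<bullet>c v))"

definition loewner_le :: "nat \<Rightarrow> complex mat \<Rightarrow> complex mat \<Rightarrow> bool" where
  "loewner_le n A B \<longleftrightarrow> A \<in> carrier_mat n n \<and> B \<in> carrier_mat n n \<and> psd n (B - A)"

text \<open>A complex-linear map M_d -> M_d (behaviour outside the carrier is irrelevant).\<close>
definition lin_map :: "nat \<Rightarrow> (complex mat \<Rightarrow> complex mat) \<Rightarrow> bool" where
  "lin_map d T \<longleftrightarrow> (\<forall>X \<in> carrier_mat d d. T X \<in> carrier_mat d d) \<and>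
     (\<forall>X \<in> carrier_mat d d. \<forall>Y \<in> carrier_mat d d. T (X + Y) = T X + T Y) \<and>
     (\<forall>c. \<forall>X \<in> carrier_mat d d. T (c \<cdot>\<^sub>m X) = c \<cdot>\<^sub>m T X)"

definition positive_map :: "nat \<Rightarrow> (complex mat \<Rightarrow> complex mat) \<Rightarrow> bool" where
  "positive_map d T \<longleftrightarrow> lin_map d T \<and> (\<forall>X. psd d X \<longrightarrow> psd d (T X))"

definition subunital :: "nat \<Rightarrow> (complex mat \<Rightarrow> complex mat) \<Rightarrow> bool" where
  "subunital d T \<longleftrightarrow> loewner_le d (T (1\<^sub>m d)) (1\<^sub>m d)"

definition block :: "nat \<Rightarrow> complex mat \<Rightarrow> nat \<Rightarrow> nat \<Rightarrow> complex mat" where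
  "block d X p q = mat d d (\<lambda>(a, b). X $$ (p * d + a, q * d + b))"

text \<open>Ampliation id_{M_k} (x) T acting on M_k(M_d) = M_{kd}, blockwise.\<close>
definition ampliation :: "nat \<Rightarrow> nat \<Rightarrow> (complex mat \<Rightarrow> complex mat) \<Rightarrow> complex mat \<Rightarrow> complex mat" where
  "ampliation k d T X = mat (k * d) (k * d)
     (\<lambda>(i, j). T (block d X (i div d) (j div d)) $$ (i mod d, j mod d))"

definition completely_positive :: "nat \<Rightarrow> (complex mat \<Rightarrow> complex mat) \<Rightarrow> bool" where
  "completely_positive d T \<longleftrightarrow> lin_map d T \<and>
     (\<forall>k \<ge> 1. \<forall>X. psd (k * d) X \<longrightarrow> psd (k * d) (ampliation k d T X))"

text \<open>Closure under composition of a set of maps on M_d (maps identified when they agree on M_d).\<close>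
definition comp_closed :: "nat \<Rightarrow> (complex mat \<Rightarrow> complex mat) set \<Rightarrow> bool" where
  "comp_closed d A \<longleftrightarrow> (\<forall>S \<in> A. \<forall>R \<in> A. \<exists>U \<in> A. \<forall>X \<in> carrier_mat d d. U X = S (R X))"

definition defect :: "nat \<Rightarrow> (complex mat \<Rightarrow> complex mat) \<Rightarrow> complex mat" where
  "defect d T = 1\<^sub>m d - T (1\<^sub>m d)"

definition stab_index :: "nat \<Rightarrow> (complex mat \<Rightarrow> complex mat) \<Rightarrow> nat" where
  "stab_index d T = (LEAST n. n \<ge> 1 \<and> (T ^^ n) (defect d T) = 0\<^sub>m d d)"

definition is_proj :: "nat \<Rightarrow> complex mat \<Rightarrow> bool" where
  "is_proj d P \<longleftrightarrow> P \<in> carrier_mat d d \<and> mat_adjoint P = P \<and> P * P = P"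

definition mat_range :: "nat \<Rightarrow> complex mat \<Rightarrow> complex vec set" where
  "mat_range d X = {X *\<^sub>v v | v. v \<in> carrier_vec d}"

definition supp :: "nat \<Rightarrow> complex mat \<Rightarrow> complex mat" where
  "supp d X = (THE P. is_proj d P \<and> mat_range d P = mat_range d X)"

definition proj_join :: "nat \<Rightarrow> complex mat set \<Rightarrow> complex mat" where
  "proj_join d S = (THE Q. is_proj d Q \<and> (\<forall>P \<in> S. loewner_le d P Q) \<and>
      (\<forall>R. is_proj d R \<and> (\<forall>P \<in> S. loewner_le d P R) \<longrightarrow> loewner_le d Q R))"

definition mrank :: "nat \<Rightarrow> complex mat \<Rightarrow> nat" where
  "mrank d X = vec_space.rank d X"

end

theory Submission
  imports Defs
begin

lemma mat_adjoint_carrier[simp]: "A \<in> carrier_mat n n \<Longrightarrow> mat_adjoint A \<in> carrier_mat n n"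
  unfolding mat_adjoint_def by (auto simp: mat_of_rows_def)

lemma mat_adjoint_dim[simp]: "dim_row (mat_adjoint A) = dim_col A" "dim_col (mat_adjoint A) = dim_row A"
  unfolding mat_adjoint_def by (auto simp: mat_of_rows_def)

lemma mat_adjoint_index_gen[simp]: "i < dim_col A \<Longrightarrow> j < dim_row A \<Longrightarrow> mat_adjoint A $$ (i,j) = cnj (A $$ (j,i))"
  unfolding mat_adjoint_def by (auto simp: mat_of_rows_def)

lemma smult_vec_zero_l[simp]: "(0::complex) \<cdot>\<^sub>v u = 0\<^sub>v (dim_vec u)"
  by (rule eq_vecI) auto
lemma smult_vec_zero_r[simp]: "(c::complex) \<cdot>\<^sub>v 0\<^sub>v n = 0\<^sub>v n"
  by (rule eq_vecI) auto
lemma add_zero_vec_r[simp]: "(u::complex vec) + 0\<^sub>v (dim_vec u) = u"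
  by (rule eq_vecI) auto

lemma mat_adjoint_index:
  assumes "A \<in> carrier_mat n n" "i < n" "j < n"
  shows "mat_adjoint A $$ (i,j) = cnj (A $$ (j,i))"
  using assms unfolding mat_adjoint_def by (auto simp: mat_of_rows_def)

lemma herm_entry:
  assumes "A \<in> carrier_mat n n" "mat_adjoint A = A" "i < n" "j < n"
  shows "A $$ (i,j) = cnj (A $$ (j,i))"
  using mat_adjoint_index[OF assms(1,3,4)] assms(2) by simp

lemma cip_sum: assumes "u \<in> carrier_vec n" "v \<in> carrier_vec n"
  shows "u \<bullet>c v = (\<Sum>i<n. u $ i * cnj (v $ i))"
  using assms unfolding scalar_prod_def by (auto intro!: sum.cong)

lemma mult_mat_vec_sum: assumes "A \<in> carrier_mat n n" "v \<in> carrier_vec n" "i < n"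
  shows "(A *\<^sub>v v) $ i = (\<Sum>j<n. A $$ (i,j) * v $ j)"
  using assms unfolding mult_mat_vec_def scalar_prod_def by (auto intro!: sum.cong)

lemma cip_cnj: assumes "u \<in> carrier_vec n" "v \<in> carrier_vec n"
  shows "cnj (u \<bullet>c v) = v \<bullet>c u"
  using assms by (simp add: cip_sum[OF assms] cip_sum[OF assms(2,1)] mult.commute)

lemma herm_ip:
  fixes A :: "complex mat"
  assumes A: "A \<in> carrier_mat n n" "mat_adjoint A = A" and u: "u \<in> carrier_vec n" and v: "v \<in> carrier_vec n"
  shows "(A *\<^sub>v u) \<bullet>c v = u \<bullet>c (A *\<^sub>v v)"
proof -
  have Au: "A *\<^sub>v u \<in> carrier_vec n" and Av: "A *\<^sub>v v \<in> carrier_vec n" using A u v by auto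
  have "(A *\<^sub>v u) \<bullet>c v = (\<Sum>i<n. (\<Sum>j<n. A $$ (i,j) * u $ j) * cnj (v $ i))"
    by (simp add: cip_sum[OF Au v] mult_mat_vec_sum[OF A(1) u])
  also have "\<dots> = (\<Sum>i<n. \<Sum>j<n. A $$ (i,j) * u $ j * cnj (v $ i))"
    by (simp add: sum_distrib_right)
  also have "\<dots> = (\<Sum>j<n. \<Sum>i<n. A $$ (i,j) * u $ j * cnj (v $ i))"
    by (rule sum.swap)
  also have "\<dots> = (\<Sum>j<n. u $ j * cnj (\<Sum>i<n. A $$ (j,i) * v $ i))"
    by (auto simp: sum_distrib_left intro!: sum.cong herm_entry[OF A] )
  also have "\<dots> = u \<bullet>c (A *\<^sub>v v)"
    by (simp add: cip_sum[OF u Av] mult_mat_vec_sum[OF A(1) v])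
  finally show ?thesis .
qed

lemma cip_self_ge0: "(v::complex vec) \<in> carrier_vec n \<Longrightarrow> Re (v \<bullet>c v) \<ge> 0 \<and> Im (v \<bullet>c v) = 0"
  using conjugate_square_ge_0_vec[of v] by (simp add: less_eq_complex_def)

lemma cip_self_zero: "(v::complex vec) \<in> carrier_vec n \<Longrightarrow> Re (v \<bullet>c v) = 0 \<Longrightarrow> v = 0\<^sub>v n"
  using cip_self_ge0[of v n] conjugate_square_eq_0_vec[of v n] by (simp add: complex_eq_iff)

definition qf :: "complex mat \<Rightarrow> complex vec \<Rightarrow> complex" where
  "qf A v = (A *\<^sub>v v) \<bullet>c v"

lemma cip_expand:
  fixes a b u w :: "complex vec"
  assumes "a \<in> carrier_vec n" "b \<in> carrier_vec n" "u \<in> carrier_vec n" "w \<in> carrier_vec n"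
  shows "(a + c \<cdot>\<^sub>v b) \<bullet>c (u + c \<cdot>\<^sub>v w) = a \<bullet>c u + cnj c * (a \<bullet>c w) + c * (b \<bullet>c u) + c * cnj c * (b \<bullet>c w)"
proof -
  have ab: "a + c \<cdot>\<^sub>v b \<in> carrier_vec n" and uw: "u + c \<cdot>\<^sub>v w \<in> carrier_vec n" using assms by auto
  have "(a + c \<cdot>\<^sub>v b) \<bullet>c (u + c \<cdot>\<^sub>v w) = (\<Sum>i<n. (a$i + c * b$i) * cnj (u$i + c * w$i))"
    using assms by (simp add: cip_sum[OF ab uw])
  also have "\<dots> = (\<Sum>i<n. a$i * cnj (u$i)) + cnj c * (\<Sum>i<n. a$i * cnj (w$i)) + c * (\<Sum>i<n. b$i * cnj (u$i))
      + c * cnj c * (\<Sum>i<n. b$i * cnj (w$i))"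
    by (simp add: sum.distrib sum_distrib_left algebra_simps)
  finally show ?thesis using assms by (simp add: cip_sum)
qed

lemma qf_expand:
  fixes A :: "complex mat"
  assumes A: "A \<in> carrier_mat n n" and u: "u \<in> carrier_vec n" and w: "w \<in> carrier_vec n"
  shows "qf A (u + c \<cdot>\<^sub>v w) = qf A u + cnj c * ((A *\<^sub>v u) \<bullet>c w) + c * ((A *\<^sub>v w) \<bullet>c u) + c * cnj c * qf A w"
proof -
  have "A *\<^sub>v (u + c \<cdot>\<^sub>v w) = A *\<^sub>v u + c \<cdot>\<^sub>v (A *\<^sub>v w)"
    using A u w by (simp add: mult_add_distrib_mat_vec mult_mat_vec)
  then show ?thesis unfolding qf_def using A u w by (simp add: cip_expand[of _ n])
qed

lemma psd_carrier: "psd n A \<Longrightarrow> A \<in> carrier_mat n n" unfolding psd_def by auto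
lemma psd_herm: "psd n A \<Longrightarrow> mat_adjoint A = A" unfolding psd_def by auto
lemma psd_qf: "psd n A \<Longrightarrow> v \<in> carrier_vec n \<Longrightarrow> Re (qf A v) \<ge> 0" unfolding psd_def qf_def by auto

lemma herm_qf_real:
  fixes A :: "complex mat"
  assumes "A \<in> carrier_mat n n" "mat_adjoint A = A" "v \<in> carrier_vec n"
  shows "Im (qf A v) = 0"
proof -
  have Av: "A *\<^sub>v v \<in> carrier_vec n" using assms by auto
  have "qf A v = v \<bullet>c (A *\<^sub>v v)" unfolding qf_def by (rule herm_ip[OF assms(1,2,3,3)])
  also have "\<dots> = cnj (qf A v)" unfolding qf_def using cip_cnj[OF Av assms(3)] by simp
  finally have "Im (qf A v) = Im (cnj (qf A v))" by simp
  then show ?thesis by simp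
qed

lemma psd_kernel:
  fixes A :: "complex mat"
  assumes psd: "psd n A" and u: "u \<in> carrier_vec n" and z: "Re (qf A u) = 0"
  shows "A *\<^sub>v u = 0\<^sub>v n"
proof -
  have A: "A \<in> carrier_mat n n" and h: "mat_adjoint A = A" using psd by (auto simp: psd_def)
  define w where "w = A *\<^sub>v u"
  have w: "w \<in> carrier_vec n" unfolding w_def using A u by auto
  define b where "b = Re (w \<bullet>c w)"
  define a where "a = Re (qf A w)"
  have b0: "b \<ge> 0" unfolding b_def using cip_self_ge0[OF w] by simp
  have a0: "a \<ge> 0" unfolding a_def using psd_qf[OF psd w] .
  have e1: "(A *\<^sub>v u) \<bullet>c w = w \<bullet>c w" unfolding w_def ..
  have "(A *\<^sub>v w) \<bullet>c u = w \<bullet>c (A *\<^sub>v u)" by (rule herm_ip[OF A h w u])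
  then have e2: "(A *\<^sub>v w) \<bullet>c u = w \<bullet>c w" by (simp add: w_def)
  have key: "0 \<le> 2 * t * b + t * t * a" for t :: real
  proof -
    have "0 \<le> Re (qf A (u + complex_of_real t \<cdot>\<^sub>v w))"
      using psd_qf[OF psd] u w by auto
    also have "\<dots> = 2 * t * b + t * t * a"
      unfolding qf_expand[OF A u w] e1 e2 using z unfolding a_def b_def by simp
    finally show ?thesis .
  qed
  have "b = 0"
  proof (rule ccontr)
    assume "b \<noteq> 0"
    with b0 have bp: "b > 0" by simp
    define s where "s = b / (a + 1)"
    have sp: "s > 0" unfolding s_def using bp a0 by simp
    have sa: "s * a \<le> b" unfolding s_def using bp a0 by (simp add: field_simps)
    have "0 \<le> 2 * (- s) * b + (- s) * (- s) * a" by (rule key)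
    also have "\<dots> = s * (s * a - 2 * b)" by (simp add: algebra_simps)
    also have "\<dots> \<le> s * (- b)" using sa sp by (intro mult_left_mono) auto
    also have "\<dots> < 0" using sp bp by (simp add: mult_pos_neg)
    finally show False by simp
  qed
  then show ?thesis using cip_self_zero[OF w] unfolding b_def w_def by simp
qed

lemma mat_vec_unit:
  fixes A :: "complex mat"
  assumes "A \<in> carrier_mat n n" "i < n" "j < n"
  shows "(A *\<^sub>v unit_vec n j) $ i = A $$ (i,j)"
  using assms by simp


lemma mat_eq_vec:
  fixes A B :: "complex mat"
  assumes "A \<in> carrier_mat n n" "B \<in> carrier_mat n n" "\<And>v. v \<in> carrier_vec n \<Longrightarrow> A *\<^sub>v v = B *\<^sub>v v"
  shows "A = B"
proof (rule eq_matI)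
  fix i j assume "i < dim_row B" "j < dim_col B"
  then have ij: "i < n" "j < n" using assms by auto
  have "A $$ (i,j) = (A *\<^sub>v unit_vec n j) $ i" by (rule mat_vec_unit[OF assms(1) ij, symmetric])
  also have "\<dots> = (B *\<^sub>v unit_vec n j) $ i" using assms(3)[of "unit_vec n j"] by simp
  also have "\<dots> = B $$ (i,j)" by (rule mat_vec_unit[OF assms(2) ij])
  finally show "A $$ (i,j) = B $$ (i,j)" .
qed (use assms in auto)

lemma zero_mat_vec[simp]: "v \<in> carrier_vec m \<Longrightarrow> 0\<^sub>m n m *\<^sub>v v = (0\<^sub>v n :: complex vec)"
  by (rule eq_vecI) (auto simp: scalar_prod_def)

lemma smult_mat_vec: "A \<in> carrier_mat n n \<Longrightarrow> v \<in> carrier_vec n \<Longrightarrow> (c \<cdot>\<^sub>m A) *\<^sub>v v = c \<cdot>\<^sub>v (A *\<^sub>v v :: complex vec)"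
  by (rule eq_vecI) (auto simp: scalar_prod_def sum_distrib_left algebra_simps)

lemma qf_add: "A \<in> carrier_mat n n \<Longrightarrow> B \<in> carrier_mat n n \<Longrightarrow> v \<in> carrier_vec n \<Longrightarrow> qf (A + B) v = qf A v + qf B v"
  unfolding qf_def by (simp add: add_mult_distrib_mat_vec[of _ n n] add_scalar_prod_distrib[of _ n])

lemma qf_minus: "A \<in> carrier_mat n n \<Longrightarrow> B \<in> carrier_mat n n \<Longrightarrow> v \<in> carrier_vec n \<Longrightarrow> qf (A - B) v = qf A v - qf B v"
  unfolding qf_def by (simp add: minus_mult_distrib_mat_vec[of _ n n] minus_scalar_prod_distrib[of _ n])

lemma qf_smult: "A \<in> carrier_mat n n \<Longrightarrow> v \<in> carrier_vec n \<Longrightarrow> qf (c \<cdot>\<^sub>m A) v = c * qf A v"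
  unfolding qf_def by (simp add: smult_mat_vec smult_scalar_prod_distrib[of _ n])

lemma qf_zero: "v \<in> carrier_vec n \<Longrightarrow> qf (0\<^sub>m n n) v = 0"
  unfolding qf_def by simp

lemma qf_one: "v \<in> carrier_vec n \<Longrightarrow> qf (1\<^sub>m n) v = v \<bullet>c v"
  unfolding qf_def by simp

lemma adjoint_add:
  fixes A B :: "complex mat"
  assumes A: "A \<in> carrier_mat n n" and B: "B \<in> carrier_mat n n"
  shows "mat_adjoint (A + B) = mat_adjoint A + mat_adjoint B"
proof (rule eq_matI)
  fix i j assume "i < dim_row (mat_adjoint A + mat_adjoint B)" "j < dim_col (mat_adjoint A + mat_adjoint B)"
  then have ij: "i < n" "j < n" using A B by auto
  show "mat_adjoint (A + B) $$ (i, j) = (mat_adjoint A + mat_adjoint B) $$ (i, j)"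
    using mat_adjoint_index[OF add_carrier_mat[OF B] ij] mat_adjoint_index[OF A ij] mat_adjoint_index[OF B ij]
      ij A B by simp
qed (use A B in auto)

lemma adjoint_minus:
  fixes A B :: "complex mat"
  assumes A: "A \<in> carrier_mat n n" and B: "B \<in> carrier_mat n n"
  shows "mat_adjoint (A - B) = mat_adjoint A - mat_adjoint B"
proof (rule eq_matI)
  fix i j assume "i < dim_row (mat_adjoint A - mat_adjoint B)" "j < dim_col (mat_adjoint A - mat_adjoint B)"
  then have ij: "i < n" "j < n" using A B by auto
  show "mat_adjoint (A - B) $$ (i, j) = (mat_adjoint A - mat_adjoint B) $$ (i, j)"
    using mat_adjoint_index[OF minus_carrier_mat[OF B] ij] mat_adjoint_index[OF A ij] mat_adjoint_index[OF B ij]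
      ij A B by simp
qed (use A B in auto)

lemma adjoint_smult_real:
  fixes A :: "complex mat"
  assumes A: "A \<in> carrier_mat n n"
  shows "mat_adjoint (complex_of_real c \<cdot>\<^sub>m A) = complex_of_real c \<cdot>\<^sub>m mat_adjoint A"
proof (rule eq_matI)
  fix i j assume "i < dim_row (complex_of_real c \<cdot>\<^sub>m mat_adjoint A)" "j < dim_col (complex_of_real c \<cdot>\<^sub>m mat_adjoint A)"
  then have ij: "i < n" "j < n" using A by auto
  have cA: "complex_of_real c \<cdot>\<^sub>m A \<in> carrier_mat n n" using A by simp
  show "mat_adjoint (complex_of_real c \<cdot>\<^sub>m A) $$ (i, j) = (complex_of_real c \<cdot>\<^sub>m mat_adjoint A) $$ (i, j)"
    using mat_adjoint_index[OF cA ij] mat_adjoint_index[OF A ij] ij A by simp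
qed (use A in auto)

lemma adjoint_zero: "mat_adjoint (0\<^sub>m n n :: complex mat) = 0\<^sub>m n n"
  by (rule eq_matI) (auto simp: mat_adjoint_index)

lemma adjoint_one: "mat_adjoint (1\<^sub>m n :: complex mat) = 1\<^sub>m n"
  by (rule eq_matI) (auto simp: mat_adjoint_index)

lemma psd_zero: "psd n (0\<^sub>m n n)"
  unfolding psd_def by (auto simp: adjoint_zero)

lemma psd_one: "psd n (1\<^sub>m n)"
  unfolding psd_def using cip_self_ge0 by (auto simp: adjoint_one)

lemma psd_add: "psd n A \<Longrightarrow> psd n B \<Longrightarrow> psd n (A + B)"
  unfolding psd_def using qf_add[of A n B] unfolding qf_def by (auto simp: adjoint_add)

lemma psd_smult: "psd n A \<Longrightarrow> c \<ge> 0 \<Longrightarrow> psd n (complex_of_real c \<cdot>\<^sub>m A)"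
  unfolding psd_def using qf_smult[of A n _ "complex_of_real c"] unfolding qf_def
  by (auto simp: adjoint_smult_real)

lemma psd_zero_form:
  fixes A :: "complex mat"
  assumes "psd n A" "\<And>v. v \<in> carrier_vec n \<Longrightarrow> Re (qf A v) = 0"
  shows "A = 0\<^sub>m n n"
  using psd_kernel[OF assms(1)] assms by (intro mat_eq_vec[of _ n]) (auto simp: psd_def)

lemma psd_antisym:
  fixes A :: "complex mat"
  assumes "psd n A" "\<And>v. v \<in> carrier_vec n \<Longrightarrow> Re (qf A v) \<le> 0"
  shows "A = 0\<^sub>m n n"
  using assms psd_qf[OF assms(1)] by (intro psd_zero_form) force+

lemma lm_carrier: "lin_map d T \<Longrightarrow> X \<in> carrier_mat d d \<Longrightarrow> T X \<in> carrier_mat d d"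
  unfolding lin_map_def by auto
lemma lm_add: "lin_map d T \<Longrightarrow> X \<in> carrier_mat d d \<Longrightarrow> Y \<in> carrier_mat d d \<Longrightarrow> T (X + Y) = T X + T Y"
  unfolding lin_map_def by auto
lemma lm_smult: "lin_map d T \<Longrightarrow> X \<in> carrier_mat d d \<Longrightarrow> T (c \<cdot>\<^sub>m X) = c \<cdot>\<^sub>m T X"
  unfolding lin_map_def by auto

lemma lm_zero:
  assumes "lin_map d T" shows "T (0\<^sub>m d d) = 0\<^sub>m d d"
proof -
  have "0\<^sub>m d d = (0::complex) \<cdot>\<^sub>m 0\<^sub>m d d" by (rule eq_matI) auto
  then have "T (0\<^sub>m d d) = 0 \<cdot>\<^sub>m T (0\<^sub>m d d)" using lm_smult[OF assms, of "0\<^sub>m d d" 0] by simp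
  also have "\<dots> = 0\<^sub>m d d" using lm_carrier[OF assms, of "0\<^sub>m d d"] by (intro eq_matI) auto
  finally show ?thesis .
qed

lemma lm_minus:
  assumes T: "lin_map d T" and X: "X \<in> carrier_mat d d" and Y: "Y \<in> carrier_mat d d"
  shows "T (X - Y) = T X - T Y"
proof -
  have "X - Y = X + (-1) \<cdot>\<^sub>m Y" using X Y by (intro eq_matI) auto
  then have "T (X - Y) = T X + (-1) \<cdot>\<^sub>m T Y" using lm_add[OF T X] lm_smult[OF T Y] Y by simp
  also have "\<dots> = T X - T Y" using lm_carrier[OF T X] lm_carrier[OF T Y] by (intro eq_matI) auto
  finally show ?thesis .
qed

lemma lin_map_pow: "lin_map d T \<Longrightarrow> lin_map d (T ^^ k)"
proof (induction k)
  case 0 then show ?case unfolding lin_map_def by auto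
next
  case (Suc k)
  then have IH: "lin_map d (T ^^ k)" by simp
  show ?case unfolding lin_map_def
    using lm_carrier[OF IH] lm_add[OF IH] lm_smult[OF IH]
      lm_carrier[OF Suc.prems] lm_add[OF Suc.prems] lm_smult[OF Suc.prems] by auto
qed

lemma pos_lin: "positive_map d T \<Longrightarrow> lin_map d T" unfolding positive_map_def by auto
lemma pos_psd: "positive_map d T \<Longrightarrow> psd d X \<Longrightarrow> psd d (T X)" unfolding positive_map_def by auto

lemma pos_pow: "positive_map d T \<Longrightarrow> positive_map d (T ^^ k)"
proof (induction k)
  case 0 then show ?case unfolding positive_map_def lin_map_def by auto
next
  case (Suc k)
  then show ?case unfolding positive_map_def
    using lin_map_pow[OF pos_lin[OF Suc.prems], of "Suc k"] pos_psd[OF Suc.prems] Suc by auto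
qed

lemma pos_mono:
  assumes "positive_map d T" "A \<in> carrier_mat d d" "B \<in> carrier_mat d d" "psd d (B - A)"
  shows "psd d (T B - T A)"
  using pos_psd[OF assms(1) assms(4)] lm_minus[OF pos_lin[OF assms(1)] assms(3,2)] by simp

fun msum :: "nat \<Rightarrow> (nat \<Rightarrow> complex mat) \<Rightarrow> nat \<Rightarrow> complex mat" where
  "msum d f 0 = 0\<^sub>m d d"
| "msum d f (Suc m) = msum d f m + f m"

lemma msum_carrier: "(\<And>i. i < m \<Longrightarrow> f i \<in> carrier_mat d d) \<Longrightarrow> msum d f m \<in> carrier_mat d d"
  by (induction m) auto

lemma msum_psd: "(\<And>i. i < m \<Longrightarrow> psd d (f i)) \<Longrightarrow> psd d (msum d f m)"
  by (induction m) (auto simp: psd_zero psd_add)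

lemma msum_qf: "(\<And>i. i < m \<Longrightarrow> f i \<in> carrier_mat d d) \<Longrightarrow> v \<in> carrier_vec d \<Longrightarrow>
   qf (msum d f m) v = (\<Sum>i<m. qf (f i) v)"
proof (induction m)
  case 0 then show ?case by (simp add: qf_zero)
next
  case (Suc m)
  have c: "msum d f m \<in> carrier_mat d d" "f m \<in> carrier_mat d d" using Suc.prems by (auto intro!: msum_carrier)
  show ?case using qf_add[OF c Suc.prems(2)] Suc by simp
qed

lemma msum_lin: "lin_map d T \<Longrightarrow> (\<And>i. i < m \<Longrightarrow> f i \<in> carrier_mat d d) \<Longrightarrow>
   T (msum d f m) = msum d (\<lambda>i. T (f i)) m"
  by (induction m) (auto simp: lm_zero lm_add msum_carrier)

lemma msum_cong: "(\<And>i. i < m \<Longrightarrow> f i = g i) \<Longrightarrow> msum d f m = msum d g m"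
  by (induction m) auto

lemma msum_zero: "(\<And>i. i < m \<Longrightarrow> f i = 0\<^sub>m d d) \<Longrightarrow> msum d f m = 0\<^sub>m d d"
  by (induction m) auto

lemma msum_shift: "(\<And>i. i < Suc m \<Longrightarrow> f i \<in> carrier_mat d d) \<Longrightarrow>
   msum d f (Suc m) = f 0 + msum d (\<lambda>i. f (Suc i)) m"
proof (induction m)
  case 0 then show ?case by (auto intro!: eq_matI)
next
  case (Suc m)
  have c: "f 0 \<in> carrier_mat d d" "msum d (\<lambda>i. f (Suc i)) m \<in> carrier_mat d d" "f (Suc m) \<in> carrier_mat d d"
    using Suc.prems by (auto intro!: msum_carrier)
  have "msum d f (Suc (Suc m)) = (f 0 + msum d (\<lambda>i. f (Suc i)) m) + f (Suc m)"
    using Suc by simp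
  also have "\<dots> = f 0 + (msum d (\<lambda>i. f (Suc i)) m + f (Suc m))"
    using c by (simp add: assoc_add_mat)
  finally show ?case by simp
qed

locale stp =
  fixes d :: nat and T :: "complex mat \<Rightarrow> complex mat"
  assumes pos: "positive_map d T" and sub: "subunital d T"
begin

lemma lin: "lin_map d T" using pos by (rule pos_lin)

definition D where "D = defect d T"
definition x where "x k = (T ^^ k) D"

lemma D_psd: "psd d D"
  using sub unfolding D_def defect_def subunital_def loewner_le_def by auto

lemma D_carrier: "D \<in> carrier_mat d d" using psd_carrier[OF D_psd] .

lemma x_psd: "psd d (x k)" unfolding x_def using pos_psd[OF pos_pow[OF pos] D_psd] .
lemma x_carrier: "x k \<in> carrier_mat d d" using psd_carrier[OF x_psd] .

lemma x_Suc: "x (Suc k) = T (x k)" unfolding x_def by simp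

lemma powI_carrier: "(T ^^ m) (1\<^sub>m d) \<in> carrier_mat d d"
  using lm_carrier[OF lin_map_pow[OF lin]] by simp

lemma telescope: "msum d x m = 1\<^sub>m d - (T ^^ m) (1\<^sub>m d)"
proof (induction m)
  case 0 then show ?case by (intro eq_matI) auto
next
  case (Suc m)
  have L: "lin_map d (T ^^ m)" by (rule lin_map_pow[OF lin])
  have T1: "T (1\<^sub>m d) \<in> carrier_mat d d" using lm_carrier[OF lin] by simp
  have "x m = (T ^^ m) (1\<^sub>m d) - (T ^^ m) (T (1\<^sub>m d))"
    unfolding x_def D_def defect_def using lm_minus[OF L _ T1] by simp
  also have "(T ^^ m) (T (1\<^sub>m d)) = (T ^^ Suc m) (1\<^sub>m d)" by (simp add: funpow_swap1)
  finally have xm: "x m = (T ^^ m) (1\<^sub>m d) - (T ^^ Suc m) (1\<^sub>m d)" .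
  show ?case using Suc xm powI_carrier[of m] powI_carrier[of "Suc m"]
    by (intro eq_matI) auto
qed

lemma partial_bound:
  assumes v: "v \<in> carrier_vec d"
  shows "(\<Sum>i<m. Re (qf (x i) v)) \<le> Re (v \<bullet>c v)"
proof -
  have "(\<Sum>i<m. Re (qf (x i) v)) = Re (qf (msum d x m) v)"
    using msum_qf[of m x d v] x_carrier v by simp
  also have "\<dots> = Re (v \<bullet>c v) - Re (qf ((T ^^ m) (1\<^sub>m d)) v)"
    unfolding telescope using qf_minus[of "1\<^sub>m d" d "(T ^^ m) (1\<^sub>m d)" v] powI_carrier v
    by (simp add: qf_one)
  also have "\<dots> \<le> Re (v \<bullet>c v)"
    using psd_qf[OF pos_psd[OF pos_pow[OF pos] psd_one] v] by simp
  finally show ?thesis .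
qed

end

lemma pow_in_A:
  assumes "T \<in> A" "comp_closed d A" "k \<ge> 1"
  shows "\<exists>U\<in>A. \<forall>X\<in>carrier_mat d d. U X = (T ^^ k) X"
  using assms(3)
proof (induction k rule: dec_induct)
  case base then show ?case using assms(1) by (intro bexI[of _ T]) auto
next
  case (step k)
  then obtain U where U: "U \<in> A" "\<forall>X\<in>carrier_mat d d. U X = (T ^^ k) X" by blast
  from assms(2) U(1) assms(1) obtain W where W: "W \<in> A" "\<forall>X\<in>carrier_mat d d. W X = T (U X)"
    unfolding comp_closed_def by blast
  show ?case using W U by (intro bexI[of _ W]) auto
qed

lemma finite_period:
  assumes "finite A" "T \<in> A" "comp_closed d A"
  shows "\<exists>a p. a \<ge> 1 \<and> p \<ge> 1 \<and> (\<forall>X\<in>carrier_mat d d. (T ^^ (a + p)) X = (T ^^ a) X)"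
proof -
  define g where "g k = (SOME U. U \<in> A \<and> (\<forall>X\<in>carrier_mat d d. U X = (T ^^ Suc k) X))" for k
  have g: "g k \<in> A \<and> (\<forall>X\<in>carrier_mat d d. g k X = (T ^^ Suc k) X)" for k
  proof -
    have "\<exists>U. U \<in> A \<and> (\<forall>X\<in>carrier_mat d d. U X = (T ^^ Suc k) X)"
      using pow_in_A[OF assms(2,3), of "Suc k"] by auto
    then show ?thesis unfolding g_def by (rule someI_ex)
  qed
  have "\<not> inj_on g {..card A}"
  proof
    assume "inj_on g {..card A}"
    then have "card {..card A} \<le> card A"
      using card_inj_on_le[of g "{..card A}" A] g assms(1) by auto
    then show False by simp
  qed
  then obtain i j where ij: "i \<noteq> j" "g i = g j" unfolding inj_on_def by blast
  then have "\<exists>i j. i < j \<and> g i = g j" by (metis linorder_neqE_nat)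
  then obtain i j where ij: "i < j" "g i = g j" by blast
  have "\<forall>X\<in>carrier_mat d d. (T ^^ (Suc i + (j - i))) X = (T ^^ Suc i) X"
    using g[of i] g[of j] ij by auto
  then show ?thesis using ij by (intro exI[of _ "Suc i"] exI[of _ "j - i"]) auto
qed

context stp
begin

lemma periodic:
  assumes a: "\<forall>X\<in>carrier_mat d d. (T ^^ (a + p)) X = (T ^^ a) X"
  shows "x (a + r + m * p) = x (a + r)"
proof (induction m)
  case 0 then show ?case by simp
next
  case (Suc m)
  have e1: "a + r + Suc m * p = (r + m * p) + (a + p)" by simp
  have "x (a + r + Suc m * p) = (T ^^ (r + m * p)) ((T ^^ (a + p)) D)"
    unfolding x_def e1 funpow_add by simp
  also have "\<dots> = (T ^^ (r + m * p)) ((T ^^ a) D)" using a D_carrier by simp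
  also have "\<dots> = x (a + r + m * p)"
  proof -
    have e2: "a + r + m * p = (r + m * p) + a" by simp
    show ?thesis unfolding x_def e2 funpow_add by simp
  qed
  finally show ?case using Suc by simp
qed

lemma eventually_zero:
  assumes a: "\<forall>X\<in>carrier_mat d d. (T ^^ (a + p)) X = (T ^^ a) X" and p: "p \<ge> 1" and k: "k \<ge> a"
  shows "x k = 0\<^sub>m d d"
proof (rule psd_antisym[OF x_psd])
  fix v :: "complex vec" assume v: "v \<in> carrier_vec d"
  obtain r where kr: "k = a + r" using k le_Suc_ex by blast
  define c where "c = Re (qf (x k) v)"
  have c0: "c \<ge> 0" unfolding c_def using psd_qf[OF x_psd v] .
  have bound: "real M * c \<le> Re (v \<bullet>c v)" for M
  proof -
    let ?N = "k + M * p"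
    let ?I = "(\<lambda>m. k + m * p) ` {..<M}"
    have inj: "inj_on (\<lambda>m. k + m * p) {..<M}" using p by (auto simp: inj_on_def)
    have sub: "?I \<subseteq> {..<?N}" using p by auto
    have "real M * c = (\<Sum>m<M. Re (qf (x (k + m * p)) v))"
      unfolding c_def kr using periodic[OF a] by simp
    also have "\<dots> = (\<Sum>i\<in>?I. Re (qf (x i) v))"
      by (simp add: sum.reindex[OF inj])
    also have "\<dots> \<le> (\<Sum>i<?N. Re (qf (x i) v))"
      by (rule sum_mono2[OF _ sub]) (auto intro: psd_qf[OF x_psd v])
    also have "\<dots> \<le> Re (v \<bullet>c v)" by (rule partial_bound[OF v])
    finally show ?thesis .
  qed
  show "Re (qf (x k) v) \<le> 0"
  proof (rule ccontr)
    assume "\<not> Re (qf (x k) v) \<le> 0"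
    then have cp: "c > 0" unfolding c_def by simp
    obtain M :: nat where "Re (v \<bullet>c v) / c < real M" using reals_Archimedean2 by blast
    then have "Re (v \<bullet>c v) < real M * c" using cp by (simp add: field_simps)
    with bound[of M] show False by simp
  qed
qed

end

lemma vec_eq_ip:
  fixes a b :: "complex vec"
  assumes a: "a \<in> carrier_vec n" and b: "b \<in> carrier_vec n"
    and h: "\<And>u. u \<in> carrier_vec n \<Longrightarrow> a \<bullet>c u = b \<bullet>c u"
  shows "a = b"
proof -
  have ab: "a - b \<in> carrier_vec n" using a b by auto
  have "(a - b) \<bullet>c (a - b) = a \<bullet>c (a - b) - b \<bullet>c (a - b)"
    using a b by (simp add: minus_scalar_prod_distrib[of _ n])
  also have "\<dots> = 0" using h[OF ab] by simp
  finally have "a - b = 0\<^sub>v n" using cip_self_zero[OF ab] by simp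
  then show ?thesis using a b
    by (metis ab carrier_vecD eq_vecI index_minus_vec(1) index_zero_vec(1) right_minus_eq)
qed

lemma proj_carrier: "is_proj d P \<Longrightarrow> P \<in> carrier_mat d d" unfolding is_proj_def by auto
lemma proj_herm: "is_proj d P \<Longrightarrow> mat_adjoint P = P" unfolding is_proj_def by auto

lemma proj_idem_vec: "is_proj d P \<Longrightarrow> v \<in> carrier_vec d \<Longrightarrow> P *\<^sub>v (P *\<^sub>v v) = P *\<^sub>v v"
  unfolding is_proj_def using assoc_mult_mat_vec[of P d d P d v] by auto

lemma proj_range:
  assumes "is_proj d P"
  shows "w \<in> mat_range d P \<longleftrightarrow> w \<in> carrier_vec d \<and> P *\<^sub>v w = w"
proof
  assume "w \<in> mat_range d P"
  then obtain v where v: "v \<in> carrier_vec d" "w = P *\<^sub>v v" unfolding mat_range_def by auto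
  then show "w \<in> carrier_vec d \<and> P *\<^sub>v w = w" using proj_idem_vec[OF assms v(1)] proj_carrier[OF assms] by auto
next
  assume "w \<in> carrier_vec d \<and> P *\<^sub>v w = w"
  then have "w = P *\<^sub>v w \<and> w \<in> carrier_vec d" by simp
  then show "w \<in> mat_range d P" unfolding mat_range_def by blast
qed

lemma proj_psd:
  assumes P: "is_proj d P" shows "psd d P"
  unfolding psd_def
proof (intro conjI ballI)
  show "P \<in> carrier_mat d d" "mat_adjoint P = P" using P by (auto simp: is_proj_def)
  fix v :: "complex vec" assume v: "v \<in> carrier_vec d"
  have Pv: "P *\<^sub>v v \<in> carrier_vec d" using proj_carrier[OF P] v by auto
  have "(P *\<^sub>v v) \<bullet>c v = (P *\<^sub>v (P *\<^sub>v v)) \<bullet>c v" using proj_idem_vec[OF P v] by simp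
  also have "\<dots> = (P *\<^sub>v v) \<bullet>c (P *\<^sub>v v)" using herm_ip[OF proj_carrier[OF P] proj_herm[OF P] Pv v] .
  finally show "0 \<le> Re ((P *\<^sub>v v) \<bullet>c v)" using cip_self_ge0[OF Pv] by simp
qed

lemma proj_unique:
  assumes P: "is_proj d P" and R: "is_proj d R" and eq: "mat_range d P = mat_range d R"
  shows "P = R"
proof (rule mat_eq_vec[OF proj_carrier[OF P] proj_carrier[OF R]])
  fix v :: "complex vec" assume v: "v \<in> carrier_vec d"
  have Pc: "P \<in> carrier_mat d d" and Rc: "R \<in> carrier_mat d d" using P R by (auto simp: is_proj_def)
  have Pv: "P *\<^sub>v v \<in> mat_range d R" using eq v unfolding mat_range_def by auto
  have Rv: "R *\<^sub>v v \<in> mat_range d P" using eq v unfolding mat_range_def by auto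
  have RP: "R *\<^sub>v (P *\<^sub>v v) = P *\<^sub>v v" using proj_range[OF R] Pv by auto
  have PR: "P *\<^sub>v (R *\<^sub>v v) = R *\<^sub>v v" using proj_range[OF P] Rv by auto
  show "P *\<^sub>v v = R *\<^sub>v v"
  proof (rule vec_eq_ip[of _ d])
    fix u :: "complex vec" assume u: "u \<in> carrier_vec d"
    have "(P *\<^sub>v v) \<bullet>c u = (R *\<^sub>v (P *\<^sub>v v)) \<bullet>c u" using RP by simp
    also have "\<dots> = (P *\<^sub>v v) \<bullet>c (R *\<^sub>v u)" using herm_ip[OF Rc proj_herm[OF R] _ u] Pc v by simp
    also have "\<dots> = v \<bullet>c (P *\<^sub>v (R *\<^sub>v u))" using herm_ip[OF Pc proj_herm[OF P] v] Rc u by simp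
    also have "P *\<^sub>v (R *\<^sub>v u) = R *\<^sub>v u"
      using proj_range[OF P] eq u unfolding mat_range_def by auto
    also have "v \<bullet>c (R *\<^sub>v u) = (R *\<^sub>v v) \<bullet>c u" using herm_ip[OF Rc proj_herm[OF R] v u] by simp
    finally show "(P *\<^sub>v v) \<bullet>c u = (R *\<^sub>v v) \<bullet>c u" .
  qed (use Pc Rc v in auto)
qed

definition outer :: "nat \<Rightarrow> complex vec \<Rightarrow> complex \<Rightarrow> complex mat" where
  "outer n u c = mat n n (\<lambda>(i,j). u $ i * cnj (u $ j) / c)"

lemma outer_carrier[simp]: "outer n u c \<in> carrier_mat n n" unfolding outer_def by auto

lemma outer_vec:
  assumes u: "u \<in> carrier_vec n" and w: "w \<in> carrier_vec n"
  shows "outer n u c *\<^sub>v w = ((w \<bullet>c u) / c) \<cdot>\<^sub>v u"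
proof (rule eq_vecI)
  fix i assume "i < dim_vec (((w \<bullet>c u) / c) \<cdot>\<^sub>v u)"
  then have i: "i < n" using u by auto
  have "(outer n u c *\<^sub>v w) $ i = (\<Sum>j<n. u $ i * cnj (u $ j) / c * w $ j)"
    using mult_mat_vec_sum[OF outer_carrier w i] i by (simp add: outer_def)
  also have "\<dots> = u $ i * (\<Sum>j<n. w $ j * cnj (u $ j)) / c"
    by (simp add: sum_distrib_left sum_divide_distrib algebra_simps)
  also have "\<dots> = (((w \<bullet>c u) / c) \<cdot>\<^sub>v u) $ i" using cip_sum[OF w u] i u by simp
  finally show "(outer n u c *\<^sub>v w) $ i = (((w \<bullet>c u) / c) \<cdot>\<^sub>v u) $ i" .
qed (use u in \<open>auto simp: outer_def\<close>)

lemma outer_herm: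
  assumes u: "u \<in> carrier_vec n" and c: "cnj c = c"
  shows "mat_adjoint (outer n u c) = outer n u c"
  by (rule eq_matI) (use c in \<open>auto simp: mat_adjoint_index outer_def\<close>)

lemma proj_extend:
  assumes P: "is_proj d P" and v: "v \<in> carrier_vec d"
  shows "\<exists>P'. is_proj d P' \<and> mat_range d P' = {a + c \<cdot>\<^sub>v v | a c. a \<in> mat_range d P}"
proof -
  have Pc: "P \<in> carrier_mat d d" and Ph: "mat_adjoint P = P" using P by (auto simp: is_proj_def)
  have rng: "a \<in> mat_range d P \<longleftrightarrow> a \<in> carrier_vec d \<and> P *\<^sub>v a = a" for a using proj_range[OF P] .
  define u where "u = v - P *\<^sub>v v"
  have u: "u \<in> carrier_vec d" unfolding u_def using Pc v by auto
  have Pv: "P *\<^sub>v v \<in> carrier_vec d" using Pc v by auto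
  have Pu: "P *\<^sub>v u = 0\<^sub>v d"
    unfolding u_def using mult_minus_distrib_mat_vec[OF Pc v Pv] proj_idem_vec[OF P v] Pv by simp
  have orth: "a \<bullet>c u = 0" if a: "a \<in> mat_range d P" for a
  proof -
    have ac: "a \<in> carrier_vec d" and Pa: "P *\<^sub>v a = a" using rng a by auto
    have "a \<bullet>c u = (P *\<^sub>v a) \<bullet>c u" using Pa by simp
    also have "\<dots> = a \<bullet>c (P *\<^sub>v u)" by (rule herm_ip[OF Pc Ph ac u])
    also have "\<dots> = 0" unfolding Pu using ac by (simp add: scalar_prod_def)
    finally show ?thesis .
  qed
  have Pw_range: "P *\<^sub>v w \<in> mat_range d P" if "w \<in> carrier_vec d" for w
    using that unfolding mat_range_def by auto
  have range_lin: "P *\<^sub>v a + c \<cdot>\<^sub>v (P *\<^sub>v b) \<in> mat_range d P" if "a \<in> carrier_vec d" "b \<in> carrier_vec d" for a b c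
  proof -
    have "P *\<^sub>v a + c \<cdot>\<^sub>v (P *\<^sub>v b) = P *\<^sub>v (a + c \<cdot>\<^sub>v b)"
      using that Pc by (simp add: mult_add_distrib_mat_vec mult_mat_vec)
    then show ?thesis using Pw_range that by simp
  qed
  show ?thesis
  proof (cases "u = 0\<^sub>v d")
    case True
    have vP: "P *\<^sub>v v = v"
    proof (rule eq_vecI)
      fix i assume "i < dim_vec v" then have i: "i < d" using v by simp
      have "(v - P *\<^sub>v v) $ i = 0\<^sub>v d $ i" using True unfolding u_def by simp
      then show "(P *\<^sub>v v) $ i = v $ i" using i v Pc by simp
    qed (use v Pc in simp)
    have "{a + c \<cdot>\<^sub>v v | a c. a \<in> mat_range d P} = mat_range d P"
    proof (intro equalityI subsetI)
      fix y assume "y \<in> {a + c \<cdot>\<^sub>v v | a c. a \<in> mat_range d P}"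
      then obtain a c where y: "y = a + c \<cdot>\<^sub>v v" "a \<in> mat_range d P" by auto
      have ac: "a \<in> carrier_vec d" and Pa: "P *\<^sub>v a = a" using rng y by auto
      have "y = P *\<^sub>v a + c \<cdot>\<^sub>v (P *\<^sub>v v)" using y Pa vP by simp
      moreover have "P *\<^sub>v a + c \<cdot>\<^sub>v (P *\<^sub>v v) \<in> mat_range d P" by (rule range_lin[OF ac v])
      ultimately show "y \<in> mat_range d P" by simp
    next
      fix y assume "y \<in> mat_range d P"
      then have "y = y + 0 \<cdot>\<^sub>v v \<and> y \<in> mat_range d P" using rng v by auto
      then show "y \<in> {a + c \<cdot>\<^sub>v v | a c. a \<in> mat_range d P}" by blast
    qed
    then show ?thesis using P by auto
  next
    case False
    define cc where "cc = u \<bullet>c u"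
    have cc0: "cc \<noteq> 0" unfolding cc_def using False conjugate_square_eq_0_vec[OF u] by simp
    have ccc: "cnj cc = cc" unfolding cc_def using cip_cnj[OF u u] .
    define Ou where "Ou = outer d u cc"
    define P' where "P' = P + Ou"
    have Oc: "Ou \<in> carrier_mat d d" unfolding Ou_def by simp
    have P'c: "P' \<in> carrier_mat d d" unfolding P'_def using Pc Oc by simp
    have P'vec: "P' *\<^sub>v w = P *\<^sub>v w + ((w \<bullet>c u) / cc) \<cdot>\<^sub>v u" if w: "w \<in> carrier_vec d" for w
      unfolding P'_def Ou_def using add_mult_distrib_mat_vec[OF Pc outer_carrier w] outer_vec[OF u w] by simp
    have P'h: "mat_adjoint P' = P'"
      unfolding P'_def using adjoint_add[OF Pc Oc] Ph outer_herm[OF u ccc] unfolding Ou_def by simp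
    have idem: "P' *\<^sub>v (P' *\<^sub>v w) = P' *\<^sub>v w" if w: "w \<in> carrier_vec d" for w
    proof -
      define \<alpha> where "\<alpha> = (w \<bullet>c u) / cc"
      have Pwc: "P *\<^sub>v w \<in> carrier_vec d" using Pc w by auto
      have e1: "P' *\<^sub>v w = P *\<^sub>v w + \<alpha> \<cdot>\<^sub>v u" unfolding \<alpha>_def by (rule P'vec[OF w])
      have P'wc: "P *\<^sub>v w + \<alpha> \<cdot>\<^sub>v u \<in> carrier_vec d" using Pwc u by auto
      have z0: "\<alpha> \<cdot>\<^sub>v 0\<^sub>v d = (0\<^sub>v d :: complex vec)" by (rule eq_vecI) auto
      have "P *\<^sub>v (P *\<^sub>v w + \<alpha> \<cdot>\<^sub>v u) = P *\<^sub>v w"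
        using z0 right_zero_vec[OF Pwc] mult_add_distrib_mat_vec[OF Pc Pwc, of "\<alpha> \<cdot>\<^sub>v u"] mult_mat_vec[OF Pc u] Pu
          proj_idem_vec[OF P w] u Pwc by simp
      moreover have "(P *\<^sub>v w + \<alpha> \<cdot>\<^sub>v u) \<bullet>c u = \<alpha> * cc"
      proof -
        have "(P *\<^sub>v w + \<alpha> \<cdot>\<^sub>v u) \<bullet>c u = (P *\<^sub>v w) \<bullet>c u + (\<alpha> \<cdot>\<^sub>v u) \<bullet>c u"
          using add_scalar_prod_distrib[OF Pwc _ ] u by simp
        also have "(P *\<^sub>v w) \<bullet>c u = 0" using orth Pw_range[OF w] by simp
        finally show ?thesis unfolding cc_def using u by simp
      qed
      ultimately show ?thesis using P'vec[OF P'wc] e1 cc0 by simp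
    qed
    have isP': "is_proj d P'"
    proof -
      have "P' * P' = P'"
      proof (rule mat_eq_vec[of _ d])
        fix w :: "complex vec" assume w: "w \<in> carrier_vec d"
        show "P' * P' *\<^sub>v w = P' *\<^sub>v w" using assoc_mult_mat_vec[OF P'c P'c w] idem[OF w] by simp
      qed (use P'c in auto)
      then show ?thesis unfolding is_proj_def using P'c P'h by simp
    qed
    have P'a: "P' *\<^sub>v a = a" if a: "a \<in> mat_range d P" for a
    proof -
      have "dim_vec u = d" "a \<in> carrier_vec d" "P *\<^sub>v a = a" using u rng a by auto
      then show ?thesis using P'vec[of a] orth[OF a] by auto
    qed
    have vu: "v \<bullet>c u = cc"
    proof -
      have veq: "v = u + P *\<^sub>v v" unfolding u_def using v Pv Pc by (intro eq_vecI) auto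
      have "(u + P *\<^sub>v v) \<bullet>c u = u \<bullet>c u + (P *\<^sub>v v) \<bullet>c u"
        by (rule add_scalar_prod_distrib[OF u Pv]) (use u in simp)
      then have "v \<bullet>c u = u \<bullet>c u + (P *\<^sub>v v) \<bullet>c u"
        using arg_cong[OF veq, of "\<lambda>z. z \<bullet>c u"] by simp
      then show ?thesis unfolding cc_def using orth Pw_range[OF v] by simp
    qed
    have P'v: "P' *\<^sub>v v = v"
    proof -
      have "P' *\<^sub>v v = P *\<^sub>v v + u" using P'vec[OF v] vu cc0 by simp
      also have "\<dots> = v" unfolding u_def using v Pv Pc by (intro eq_vecI) auto
      finally show ?thesis .
    qed
    have "mat_range d P' = {a + c \<cdot>\<^sub>v v | a c. a \<in> mat_range d P}"
    proof (intro equalityI subsetI)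
      fix y assume "y \<in> mat_range d P'"
      then obtain w where w: "w \<in> carrier_vec d" "y = P' *\<^sub>v w" unfolding mat_range_def by auto
      define \<alpha> where "\<alpha> = (w \<bullet>c u) / cc"
      have "y = P *\<^sub>v w + \<alpha> \<cdot>\<^sub>v u" unfolding \<alpha>_def using P'vec w by simp
      also have "\<dots> = (P *\<^sub>v w + (- \<alpha>) \<cdot>\<^sub>v (P *\<^sub>v v)) + \<alpha> \<cdot>\<^sub>v v"
        unfolding u_def using w v Pv Pc by (intro eq_vecI) (simp_all add: right_diff_distrib)
      finally show "y \<in> {a + c \<cdot>\<^sub>v v | a c. a \<in> mat_range d P}"
        using range_lin[OF w(1) v] by blast
    next
      fix y assume "y \<in> {a + c \<cdot>\<^sub>v v | a c. a \<in> mat_range d P}"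
      then obtain a c where y: "y = a + c \<cdot>\<^sub>v v" "a \<in> mat_range d P" by auto
      have ac: "a \<in> carrier_vec d" using rng y by auto
      have "P' *\<^sub>v y = y" unfolding y(1)
        using mult_add_distrib_mat_vec[OF P'c ac, of "c \<cdot>\<^sub>v v"] mult_mat_vec[OF P'c v] P'a[OF y(2)] P'v v
        by simp
      moreover have "y \<in> carrier_vec d" using y ac v by simp
      ultimately have "y = P' *\<^sub>v y \<and> y \<in> carrier_vec d" by simp
      then show "y \<in> mat_range d P'" unfolding mat_range_def by blast
    qed
    then show ?thesis using isP' by blast
  qed
qed

lemma mat_vec_zero_r: "X \<in> carrier_mat n m \<Longrightarrow> X *\<^sub>v 0\<^sub>v m = (0\<^sub>v n :: complex vec)"
  by (rule eq_vecI) (auto simp: scalar_prod_def)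

lemma zero_is_proj: "is_proj d (0\<^sub>m d d)"
  unfolding is_proj_def by (auto simp: adjoint_zero)

lemma range_zero: "mat_range d (0\<^sub>m d d) = {0\<^sub>v d :: complex vec}"
proof (intro equalityI subsetI)
  fix y :: "complex vec" assume "y \<in> mat_range d (0\<^sub>m d d)"
  then show "y \<in> {0\<^sub>v d}" unfolding mat_range_def by auto
next
  fix y :: "complex vec" assume "y \<in> {0\<^sub>v d}"
  then have "y = 0\<^sub>m d d *\<^sub>v 0\<^sub>v d \<and> 0\<^sub>v d \<in> carrier_vec d" by simp
  then show "y \<in> mat_range d (0\<^sub>m d d)" unfolding mat_range_def by blast
qed

lemma proj_range_partial:
  fixes X :: "complex mat"
  assumes X: "X \<in> carrier_mat d d"
  shows "k \<le> d \<Longrightarrow> \<exists>P. is_proj d P \<and> mat_range d P =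
     {X *\<^sub>v w | w. w \<in> carrier_vec d \<and> (\<forall>j. k \<le> j \<longrightarrow> j < d \<longrightarrow> w $ j = 0)}"
proof (induction k)
  case 0
  have "{X *\<^sub>v w | w. w \<in> carrier_vec d \<and> (\<forall>j. 0 \<le> j \<longrightarrow> j < d \<longrightarrow> w $ j = 0)} = {0\<^sub>v d}"
  proof (intro equalityI subsetI)
    fix y :: "complex vec" assume "y \<in> {X *\<^sub>v w | w. w \<in> carrier_vec d \<and> (\<forall>j. 0 \<le> j \<longrightarrow> j < d \<longrightarrow> w $ j = 0)}"
    then obtain w where w: "y = X *\<^sub>v w" "w \<in> carrier_vec d" "\<forall>j<d. w $ j = 0" by auto
    have "w = 0\<^sub>v d" using w by (intro eq_vecI) auto
    then show "y \<in> {0\<^sub>v d}" using w X mat_vec_zero_r[OF X] by simp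
  next
    fix y :: "complex vec" assume "y \<in> {0\<^sub>v d}"
    then have "y = X *\<^sub>v 0\<^sub>v d \<and> 0\<^sub>v d \<in> carrier_vec d \<and> (\<forall>j. 0 \<le> j \<longrightarrow> j < d \<longrightarrow> (0\<^sub>v d :: complex vec) $ j = 0)"
      using mat_vec_zero_r[OF X] by auto
    then show "y \<in> {X *\<^sub>v w | w. w \<in> carrier_vec d \<and> (\<forall>j. 0 \<le> j \<longrightarrow> j < d \<longrightarrow> w $ j = 0)}" by blast
  qed
  then show ?case using zero_is_proj range_zero by metis
next
  case (Suc k)
  then have k: "k < d" by simp
  from Suc obtain P where P: "is_proj d P"
    and rP: "mat_range d P = {X *\<^sub>v w | w. w \<in> carrier_vec d \<and> (\<forall>j. k \<le> j \<longrightarrow> j < d \<longrightarrow> w $ j = 0)}"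
    by auto
  define e where "e = (unit_vec d k :: complex vec)"
  have e: "e \<in> carrier_vec d" unfolding e_def by simp
  define v where "v = X *\<^sub>v e"
  have v: "v \<in> carrier_vec d" unfolding v_def using X e by simp
  obtain P' where P': "is_proj d P'" and rP': "mat_range d P' = {a + c \<cdot>\<^sub>v v | a c. a \<in> mat_range d P}"
    using proj_extend[OF P v] by blast
  have "{a + c \<cdot>\<^sub>v v | a c. a \<in> mat_range d P} =
     {X *\<^sub>v w | w. w \<in> carrier_vec d \<and> (\<forall>j. Suc k \<le> j \<longrightarrow> j < d \<longrightarrow> w $ j = 0)}"
  proof (intro equalityI subsetI)
    fix y assume "y \<in> {a + c \<cdot>\<^sub>v v | a c. a \<in> mat_range d P}"
    then obtain w c where y: "y = X *\<^sub>v w + c \<cdot>\<^sub>v v" "w \<in> carrier_vec d" "\<forall>j. k \<le> j \<longrightarrow> j < d \<longrightarrow> w $ j = 0"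
      unfolding rP by auto
    have "y = X *\<^sub>v (w + c \<cdot>\<^sub>v e)" unfolding y(1) v_def
      using X y(2) e by (simp add: mult_add_distrib_mat_vec mult_mat_vec)
    moreover have "w + c \<cdot>\<^sub>v e \<in> carrier_vec d" using y(2) e by simp
    moreover have "\<forall>j. Suc k \<le> j \<longrightarrow> j < d \<longrightarrow> (w + c \<cdot>\<^sub>v e) $ j = 0"
      using y(2,3) e unfolding e_def by auto
    ultimately show "y \<in> {X *\<^sub>v w | w. w \<in> carrier_vec d \<and> (\<forall>j. Suc k \<le> j \<longrightarrow> j < d \<longrightarrow> w $ j = 0)}"
      by blast
  next
    fix y :: "complex vec" assume "y \<in> {X *\<^sub>v w | w. w \<in> carrier_vec d \<and> (\<forall>j. Suc k \<le> j \<longrightarrow> j < d \<longrightarrow> w $ j = 0)}"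
    then obtain w' where y: "y = X *\<^sub>v w'" "w' \<in> carrier_vec d" "\<forall>j. Suc k \<le> j \<longrightarrow> j < d \<longrightarrow> w' $ j = 0"
      by auto
    define w where "w = vec d (\<lambda>j. if j = k then 0 else w' $ j)"
    define c where "c = w' $ k"
    have w: "w \<in> carrier_vec d" unfolding w_def by simp
    have wk: "\<forall>j. k \<le> j \<longrightarrow> j < d \<longrightarrow> w $ j = 0"
    proof (intro allI impI)
      fix j assume j: "k \<le> j" "j < d"
      show "w $ j = 0"
      proof (cases "j = k")
        case True then show ?thesis using j unfolding w_def by simp
      next
        case False then have "Suc k \<le> j" using j by simp
        then show ?thesis using y(3) j False unfolding w_def by simp
      qed
    qed
    have "w' = w + c \<cdot>\<^sub>v e"
      using y(2) unfolding w_def c_def e_def by (intro eq_vecI) (auto simp: unit_vec_def)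
    then have "y = X *\<^sub>v w + c \<cdot>\<^sub>v v" unfolding y(1) v_def
      using X w e by (simp add: mult_add_distrib_mat_vec mult_mat_vec)
    moreover have "X *\<^sub>v w \<in> mat_range d P" unfolding rP using w wk by blast
    ultimately show "y \<in> {a + c \<cdot>\<^sub>v v | a c. a \<in> mat_range d P}" by blast
  qed
  then show ?case using P' rP' by auto
qed

lemma proj_for_range:
  fixes X :: "complex mat"
  assumes X: "X \<in> carrier_mat d d"
  shows "\<exists>P. is_proj d P \<and> mat_range d P = mat_range d X"
proof -
  obtain P where P: "is_proj d P" and
    r: "mat_range d P = {X *\<^sub>v w | w. w \<in> carrier_vec d \<and> (\<forall>j. d \<le> j \<longrightarrow> j < d \<longrightarrow> w $ j = 0)}"
    using proj_range_partial[OF X, of d] by auto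
  have "{X *\<^sub>v w | w. w \<in> carrier_vec d \<and> (\<forall>j. d \<le> j \<longrightarrow> j < d \<longrightarrow> w $ j = 0)} = mat_range d X"
    unfolding mat_range_def by auto
  then have "mat_range d P = mat_range d X" using r by simp
  then show ?thesis using P by blast
qed

lemma supp_props:
  fixes X :: "complex mat"
  assumes X: "X \<in> carrier_mat d d"
  shows "is_proj d (supp d X) \<and> mat_range d (supp d X) = mat_range d X"
proof -
  obtain P where P: "is_proj d P \<and> mat_range d P = mat_range d X" using proj_for_range[OF X] by blast
  show ?thesis unfolding supp_def
  proof (rule theI[of _ P])
    show "is_proj d P \<and> mat_range d P = mat_range d X" by fact
    fix R assume "is_proj d R \<and> mat_range d R = mat_range d X"
    then show "R = P" using proj_unique[of d R P] P by auto
  qed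
qed

lemma herm_swap:
  fixes A B :: "complex mat"
  assumes A: "A \<in> carrier_mat n n" "mat_adjoint A = A" and B: "B \<in> carrier_mat n n" "mat_adjoint B = B"
    and h: "\<And>w. w \<in> carrier_vec n \<Longrightarrow> A *\<^sub>v (B *\<^sub>v w) = A *\<^sub>v w"
    and w: "w \<in> carrier_vec n"
  shows "B *\<^sub>v (A *\<^sub>v w) = A *\<^sub>v w"
proof (rule vec_eq_ip[of _ n])
  fix u :: "complex vec" assume u: "u \<in> carrier_vec n"
  have Aw: "A *\<^sub>v w \<in> carrier_vec n" using A w by simp
  have Bu: "B *\<^sub>v u \<in> carrier_vec n" using B u by simp
  have "(B *\<^sub>v (A *\<^sub>v w)) \<bullet>c u = (A *\<^sub>v w) \<bullet>c (B *\<^sub>v u)" by (rule herm_ip[OF B Aw u])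
  also have "\<dots> = w \<bullet>c (A *\<^sub>v (B *\<^sub>v u))" by (rule herm_ip[OF A w Bu])
  also have "\<dots> = w \<bullet>c (A *\<^sub>v u)" using h[OF u] by simp
  also have "\<dots> = (A *\<^sub>v w) \<bullet>c u" using herm_ip[OF A w u] by simp
  finally show "(B *\<^sub>v (A *\<^sub>v w)) \<bullet>c u = (A *\<^sub>v w) \<bullet>c u" .
qed (use A B w in auto)

lemma herm_swap':
  fixes A B :: "complex mat"
  assumes A: "A \<in> carrier_mat n n" "mat_adjoint A = A" and B: "B \<in> carrier_mat n n" "mat_adjoint B = B"
    and h: "\<And>w. w \<in> carrier_vec n \<Longrightarrow> B *\<^sub>v (A *\<^sub>v w) = A *\<^sub>v w"
    and w: "w \<in> carrier_vec n"
  shows "A *\<^sub>v (B *\<^sub>v w) = A *\<^sub>v w"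
proof (rule vec_eq_ip[of _ n])
  fix u :: "complex vec" assume u: "u \<in> carrier_vec n"
  have Bw: "B *\<^sub>v w \<in> carrier_vec n" using B w by simp
  have Au: "A *\<^sub>v u \<in> carrier_vec n" using A u by simp
  have "(A *\<^sub>v (B *\<^sub>v w)) \<bullet>c u = (B *\<^sub>v w) \<bullet>c (A *\<^sub>v u)" by (rule herm_ip[OF A Bw u])
  also have "\<dots> = w \<bullet>c (B *\<^sub>v (A *\<^sub>v u))" by (rule herm_ip[OF B w Au])
  also have "\<dots> = w \<bullet>c (A *\<^sub>v u)" using h[OF u] by simp
  also have "\<dots> = (A *\<^sub>v w) \<bullet>c u" using herm_ip[OF A w u] by simp
  finally show "(A *\<^sub>v (B *\<^sub>v w)) \<bullet>c u = (A *\<^sub>v w) \<bullet>c u" .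
qed (use A B w in auto)

lemma proj_sub_range:
  assumes P: "is_proj d P" and R: "is_proj d R" and sub: "mat_range d P \<subseteq> mat_range d R"
  shows "loewner_le d P R"
proof -
  have Pc: "P \<in> carrier_mat d d" and Ph: "mat_adjoint P = P" using P by (auto simp: is_proj_def)
  have Rc: "R \<in> carrier_mat d d" and Rh: "mat_adjoint R = R" using R by (auto simp: is_proj_def)
  have RP: "R *\<^sub>v (P *\<^sub>v w) = P *\<^sub>v w" if w: "w \<in> carrier_vec d" for w
  proof -
    have "P *\<^sub>v w \<in> mat_range d R" using sub w unfolding mat_range_def by auto
    then show ?thesis using proj_range[OF R] by auto
  qed
  have PR: "P *\<^sub>v (R *\<^sub>v w) = P *\<^sub>v w" if w: "w \<in> carrier_vec d" for w
    by (rule herm_swap'[OF Pc Ph Rc Rh RP w])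
  have Ec: "R - P \<in> carrier_mat d d" by (rule minus_carrier_mat[OF Pc])
  have Eh: "mat_adjoint (R - P) = R - P" using adjoint_minus[OF Rc Pc] Ph Rh by simp
  have Evec: "(R - P) *\<^sub>v w = R *\<^sub>v w - P *\<^sub>v w" if "w \<in> carrier_vec d" for w
    using minus_mult_distrib_mat_vec[OF Rc Pc that] .
  have idem: "(R - P) *\<^sub>v ((R - P) *\<^sub>v w) = (R - P) *\<^sub>v w" if w: "w \<in> carrier_vec d" for w
  proof -
    have Rw: "R *\<^sub>v w \<in> carrier_vec d" and Pw: "P *\<^sub>v w \<in> carrier_vec d" using w Rc Pc by auto
    have "(R - P) *\<^sub>v ((R - P) *\<^sub>v w) = (R *\<^sub>v (R *\<^sub>v w) - R *\<^sub>v (P *\<^sub>v w)) - (P *\<^sub>v (R *\<^sub>v w) - P *\<^sub>v (P *\<^sub>v w))"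
      using Evec[OF w] Evec[of "R *\<^sub>v w - P *\<^sub>v w"] Rw Pw
        mult_minus_distrib_mat_vec[OF Rc Rw Pw] mult_minus_distrib_mat_vec[OF Pc Rw Pw] by simp
    also have "\<dots> = (R *\<^sub>v w - P *\<^sub>v w) - (P *\<^sub>v w - P *\<^sub>v w)"
      using proj_idem_vec[OF R w] proj_idem_vec[OF P w] RP[OF w] PR[OF w] by simp
    also have "\<dots> = (R - P) *\<^sub>v w" using Evec[OF w] Rw Pw by (intro eq_vecI) auto
    finally show ?thesis .
  qed
  have "is_proj d (R - P)"
  proof -
    have "(R - P) * (R - P) = R - P"
    proof (rule mat_eq_vec[of _ d])
      fix w :: "complex vec" assume w: "w \<in> carrier_vec d"
      show "(R - P) * (R - P) *\<^sub>v w = (R - P) *\<^sub>v w" using assoc_mult_mat_vec[OF Ec Ec w] idem[OF w] by simp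
    qed (use Ec in auto)
    then show ?thesis unfolding is_proj_def using Ec Eh by simp
  qed
  then show ?thesis unfolding loewner_le_def using proj_psd Pc Rc by auto
qed

lemma proj_le_range:
  assumes P: "is_proj d P" and R: "is_proj d R" and le: "loewner_le d P R"
  shows "mat_range d P \<subseteq> mat_range d R"
proof
  fix w assume "w \<in> mat_range d P"
  then have w: "w \<in> carrier_vec d" and Pw: "P *\<^sub>v w = w" using proj_range[OF P] by auto
  have Pc: "P \<in> carrier_mat d d" and Ph: "mat_adjoint P = P" using P by (auto simp: is_proj_def)
  have Rc: "R \<in> carrier_mat d d" and Rh: "mat_adjoint R = R" using R by (auto simp: is_proj_def)
  define z where "z = R *\<^sub>v w"
  have z: "z \<in> carrier_vec d" unfolding z_def using Rc w by simp
  define y where "y = w - z"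
  have y: "y \<in> carrier_vec d" unfolding y_def using w z by simp
  have Ry: "R *\<^sub>v y = 0\<^sub>v d"
    unfolding y_def z_def using mult_minus_distrib_mat_vec[OF Rc w, of "R *\<^sub>v w"] proj_idem_vec[OF R w] Rc w
    by simp
  have psdE: "psd d (R - P)" using le unfolding loewner_le_def by simp
  have "0 \<le> Re (qf (R - P) y)" using psd_qf[OF psdE y] .
  also have "\<dots> = Re (qf R y) - Re (qf P y)" using qf_minus[OF Rc Pc y] by simp
  also have "qf R y = 0" unfolding qf_def Ry using y by (simp add: scalar_prod_def)
  finally have "Re (qf P y) \<le> 0" by simp
  then have "Re (qf P y) = 0" using psd_qf[OF proj_psd[OF P] y] by simp
  then have Py: "P *\<^sub>v y = 0\<^sub>v d" using psd_kernel[OF proj_psd[OF P] y] by simp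
  have wPz: "w = P *\<^sub>v z"
  proof -
    have "P *\<^sub>v y = P *\<^sub>v w - P *\<^sub>v z" unfolding y_def using mult_minus_distrib_mat_vec[OF Pc w z] .
    then have "P *\<^sub>v w - P *\<^sub>v z = 0\<^sub>v d" using Py by simp
    then have "P *\<^sub>v w = P *\<^sub>v z" using Pc w z
      by (metis carrier_vecD dim_mult_mat_vec carrier_matD(1) eq_vecI index_minus_vec(1) index_zero_vec(1) right_minus_eq)
    then show ?thesis using Pw by simp
  qed
  define A where "A = w \<bullet>c w"
  have zw: "z \<bullet>c w = A"
  proof -
    have "A = (P *\<^sub>v z) \<bullet>c w" unfolding A_def using wPz by simp
    also have "\<dots> = z \<bullet>c (P *\<^sub>v w)" by (rule herm_ip[OF Pc Ph z w])
    finally show ?thesis using Pw by simp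
  qed
  have wz: "w \<bullet>c z = A"
  proof -
    have "w \<bullet>c z = cnj (z \<bullet>c w)" using cip_cnj[OF z w] by simp
    also have "\<dots> = cnj A" using zw by simp
    also have "\<dots> = A" unfolding A_def using cip_cnj[OF w w] by simp
    finally show ?thesis .
  qed
  have zz: "z \<bullet>c z = A"
  proof -
    have "z \<bullet>c z = w \<bullet>c (R *\<^sub>v z)" unfolding z_def by (rule herm_ip[OF Rc Rh w]) (use Rc w in simp)
    also have "R *\<^sub>v z = z" unfolding z_def by (rule proj_idem_vec[OF R w])
    finally show ?thesis using wz by simp
  qed
  have "y = w + (-1) \<cdot>\<^sub>v z" unfolding y_def using w z by (intro eq_vecI) auto
  then have "y \<bullet>c y = w \<bullet>c w + cnj (-1) * (w \<bullet>c z) + (-1) * (z \<bullet>c w) + (-1) * cnj (-1) * (z \<bullet>c z)"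
    using cip_expand[OF w z w z, of "-1"] by simp
  also have "\<dots> = 0" using wz zw zz unfolding A_def by simp
  finally have "y = 0\<^sub>v d" using cip_self_zero[OF y] by simp
  then have "R *\<^sub>v w = w" unfolding y_def z_def using w Rc
    by (metis carrier_vecD dim_mult_mat_vec carrier_matD(1) eq_vecI index_minus_vec(1) index_zero_vec(1) right_minus_eq)
  then show "w \<in> mat_range d R" using proj_range[OF R] w by auto
qed

lemma psd_dom_range:
  fixes Y Z :: "complex mat"
  assumes Y: "psd d Y" and Z: "psd d Z" and c: "psd d (complex_of_real c \<cdot>\<^sub>m Z - Y)"
  shows "mat_range d Y \<subseteq> mat_range d Z"
proof
  fix y0 assume "y0 \<in> mat_range d Y"
  then obtain w where w: "w \<in> carrier_vec d" and y0: "y0 = Y *\<^sub>v w" unfolding mat_range_def by auto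
  have Yc: "Y \<in> carrier_mat d d" and Yh: "mat_adjoint Y = Y" using Y by (auto simp: psd_def)
  have Zc: "Z \<in> carrier_mat d d" and Zh: "mat_adjoint Z = Z" using Z by (auto simp: psd_def)
  define P where "P = supp d Z"
  have P: "is_proj d P" and rP: "mat_range d P = mat_range d Z" using supp_props[OF Zc] unfolding P_def by auto
  have Pc: "P \<in> carrier_mat d d" and Ph: "mat_adjoint P = P" using P by (auto simp: is_proj_def)
  have PZ: "P *\<^sub>v (Z *\<^sub>v u) = Z *\<^sub>v u" if u: "u \<in> carrier_vec d" for u
  proof -
    have "Z *\<^sub>v u \<in> mat_range d Z" unfolding mat_range_def using u by blast
    then have "Z *\<^sub>v u \<in> mat_range d P" using rP by simp
    then show ?thesis using proj_range[OF P] by auto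
  qed
  have ZP: "Z *\<^sub>v (P *\<^sub>v u) = Z *\<^sub>v u" if u: "u \<in> carrier_vec d" for u
    by (rule herm_swap'[OF Zc Zh Pc Ph PZ u])
  have YP: "Y *\<^sub>v (P *\<^sub>v u) = Y *\<^sub>v u" if u: "u \<in> carrier_vec d" for u
  proof -
    define t where "t = u - P *\<^sub>v u"
    have t: "t \<in> carrier_vec d" unfolding t_def using u Pc by simp
    have Zt: "Z *\<^sub>v t = 0\<^sub>v d" unfolding t_def using mult_minus_distrib_mat_vec[OF Zc u, of "P *\<^sub>v u"] ZP[OF u] Pc u Zc
      by simp
    have Cc: "complex_of_real c \<cdot>\<^sub>m Z \<in> carrier_mat d d" using Zc by simp
    have "0 \<le> Re (qf (complex_of_real c \<cdot>\<^sub>m Z - Y) t)" using psd_qf[OF c t] .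
    also have "\<dots> = c * Re (qf Z t) - Re (qf Y t)" using qf_minus[OF Cc Yc t] qf_smult[OF Zc t] by simp
    also have "qf Z t = 0" unfolding qf_def Zt using t by (simp add: scalar_prod_def)
    finally have "Re (qf Y t) = 0" using psd_qf[OF Y t] by simp
    then have "Y *\<^sub>v t = 0\<^sub>v d" using psd_kernel[OF Y t] by simp
    then have "Y *\<^sub>v u - Y *\<^sub>v (P *\<^sub>v u) = 0\<^sub>v d"
      unfolding t_def using mult_minus_distrib_mat_vec[OF Yc u, of "P *\<^sub>v u"] Pc u by simp
    then show ?thesis using Yc Pc u
      by (metis carrier_vecD dim_mult_mat_vec carrier_matD(1) eq_vecI index_minus_vec(1) index_zero_vec(1) right_minus_eq)
  qed
  have "P *\<^sub>v (Y *\<^sub>v w) = Y *\<^sub>v w" by (rule herm_swap[OF Yc Yh Pc Ph YP w])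
  then have "Y *\<^sub>v w \<in> mat_range d P" using proj_range[OF P] Yc w by auto
  then show "y0 \<in> mat_range d Z" using rP y0 by simp
qed

lemma re_cnj_sq: "Re (z * cnj z) = (cmod z)^2"
  by (simp add: complex_mult_cnj cmod_power2)

lemma cip_self_sum: assumes u: "u \<in> carrier_vec n" shows "Re (u \<bullet>c u) = (\<Sum>k<n. (cmod (u $ k))^2)"
proof -
  have "u \<bullet>c u = (\<Sum>k<n. u$k * cnj (u$k))" by (rule cip_sum[OF u u])
  then have "Re (u \<bullet>c u) = (\<Sum>k<n. Re (u$k * cnj (u$k)))" by (simp only: Re_sum)
  then show ?thesis by (simp only: re_cnj_sq)
qed

lemma entry_bound:
  assumes u: "u \<in> carrier_vec n" and i: "i < n"
  shows "(cmod (u $ i))^2 \<le> Re (u \<bullet>c u)"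
proof -
  have "(cmod (u $ i))^2 = (\<Sum>k\<in>{i}. (cmod (u $ k))^2)" by simp
  also have "\<dots> \<le> (\<Sum>k<n. (cmod (u $ k))^2)" by (rule sum_mono2) (use i in auto)
  finally show ?thesis using cip_self_sum[OF u] by simp
qed

lemma prod_bound:
  assumes u: "u \<in> carrier_vec n" and i: "i < n" and j: "j < n"
  shows "cmod (u $ i) * cmod (u $ j) \<le> Re (u \<bullet>c u)"
proof -
  let ?a = "cmod (u $ i)" and ?b = "cmod (u $ j)"
  have "?a * ?b \<le> max (?a^2) (?b^2)"
  proof (cases "?a \<le> ?b")
    case True then have "?a * ?b \<le> ?b * ?b" by (intro mult_right_mono) auto
    then show ?thesis by (simp add: power2_eq_square)
  next
    case False then have "?a * ?b \<le> ?a * ?a" by (intro mult_left_mono) auto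
    then show ?thesis by (simp add: power2_eq_square)
  qed
  also have "\<dots> \<le> Re (u \<bullet>c u)" using entry_bound[OF u i] entry_bound[OF u j] by simp
  finally show ?thesis .
qed

lemma qf_bound:
  fixes B :: "complex mat"
  assumes B: "B \<in> carrier_mat n n"
  shows "\<exists>K \<ge> 1. \<forall>u \<in> carrier_vec n. cmod ((B *\<^sub>v u) \<bullet>c u) \<le> K * Re (u \<bullet>c u)"
proof -
  define S where "S = (\<Sum>i<n. \<Sum>j<n. cmod (B $$ (i,j)))"
  have S0: "S \<ge> 0" unfolding S_def by (intro sum_nonneg) auto
  have "cmod ((B *\<^sub>v u) \<bullet>c u) \<le> (1 + S) * Re (u \<bullet>c u)" if u: "u \<in> carrier_vec n" for u
  proof -
    have Bu: "B *\<^sub>v u \<in> carrier_vec n" using B u by simp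
    have N0: "Re (u \<bullet>c u) \<ge> 0" using cip_self_ge0[OF u] by simp
    have "(B *\<^sub>v u) \<bullet>c u = (\<Sum>i<n. \<Sum>j<n. B $$ (i,j) * u $ j * cnj (u $ i))"
      by (simp add: cip_sum[OF Bu u] mult_mat_vec_sum[OF B u] sum_distrib_right)
    moreover have "cmod (\<Sum>i<n. \<Sum>j<n. B $$ (i,j) * u $ j * cnj (u $ i)) \<le> (\<Sum>i<n. \<Sum>j<n. cmod (B $$ (i,j) * u $ j * cnj (u $ i)))"
      by (rule order_trans[OF norm_sum sum_mono[OF norm_sum]])
    ultimately have "cmod ((B *\<^sub>v u) \<bullet>c u) \<le> (\<Sum>i<n. \<Sum>j<n. cmod (B $$ (i,j) * u $ j * cnj (u $ i)))"
      by simp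
    also have "\<dots> \<le> (\<Sum>i<n. \<Sum>j<n. cmod (B $$ (i,j)) * Re (u \<bullet>c u))"
    proof (intro sum_mono)
      fix i j assume i: "i \<in> {..<n}" and j: "j \<in> {..<n}"
      have "cmod (B $$ (i,j) * u $ j * cnj (u $ i)) = cmod (B $$ (i,j)) * (cmod (u $ j) * cmod (u $ i))"
        by (simp add: norm_mult complex_mod_cnj)
      also have "\<dots> \<le> cmod (B $$ (i,j)) * Re (u \<bullet>c u)"
        using prod_bound[OF u, of j i] i j by (intro mult_left_mono) auto
      finally show "cmod (B $$ (i,j) * u $ j * cnj (u $ i)) \<le> cmod (B $$ (i,j)) * Re (u \<bullet>c u)" .
    qed
    also have "\<dots> = S * Re (u \<bullet>c u)" unfolding S_def by (simp add: sum_distrib_right)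
    also have "\<dots> \<le> (1 + S) * Re (u \<bullet>c u)" using N0 by (simp add: algebra_simps)
    finally show ?thesis .
  qed
  then show ?thesis using S0 by (intro exI[of _ "1 + S"]) auto
qed

lemma supp_factor:
  fixes Z :: "complex mat"
  assumes Z: "Z \<in> carrier_mat d d"
  shows "\<exists>M \<in> carrier_mat d d. \<forall>v \<in> carrier_vec d. supp d Z *\<^sub>v v = Z *\<^sub>v (M *\<^sub>v v)"
proof -
  define P where "P = supp d Z"
  have P: "is_proj d P" and rP: "mat_range d P = mat_range d Z" using supp_props[OF Z] unfolding P_def by auto
  have Pc: "P \<in> carrier_mat d d" using P by (simp add: is_proj_def)
  have ex: "\<exists>m. m \<in> carrier_vec d \<and> Z *\<^sub>v m = col P j" if j: "j < d" for j
  proof -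
    have "col P j = P *\<^sub>v unit_vec d j"
      using Pc j by (intro eq_vecI) (auto simp: mat_vec_unit)
    then have "col P j \<in> mat_range d P" unfolding mat_range_def by auto
    then have "col P j \<in> mat_range d Z" using rP by simp
    then show ?thesis unfolding mat_range_def by auto
  qed
  define m where "m j = (SOME m. m \<in> carrier_vec d \<and> Z *\<^sub>v m = col P j)" for j
  have m: "m j \<in> carrier_vec d \<and> Z *\<^sub>v m j = col P j" if "j < d" for j
    unfolding m_def by (rule someI_ex[OF ex[OF that]])
  define M where "M = mat d d (\<lambda>(i,j). m j $ i)"
  have Mc: "M \<in> carrier_mat d d" unfolding M_def by simp
  have colM: "col M j = m j" if j: "j < d" for j
    unfolding M_def using j m[OF j] by (intro eq_vecI) auto
  have ZM: "Z * M = P"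
  proof (rule eq_matI)
    fix i j assume "i < dim_row P" "j < dim_col P"
    then have ij: "i < d" "j < d" using Pc by auto
    have "(Z * M) $$ (i,j) = row Z i \<bullet> col M j" using Z Mc ij by simp
    also have "\<dots> = (Z *\<^sub>v m j) $ i" using Z ij colM[OF ij(2)] by simp
    also have "\<dots> = P $$ (i,j)" using m[OF ij(2)] ij Pc by simp
    finally show "(Z * M) $$ (i,j) = P $$ (i,j)" .
  qed (use Z Mc Pc in auto)
  have "\<forall>v \<in> carrier_vec d. P *\<^sub>v v = Z *\<^sub>v (M *\<^sub>v v)"
    using assoc_mult_mat_vec[OF Z Mc] ZM by auto
  then show ?thesis using Mc unfolding P_def by blast
qed

lemma proj_dom:
  fixes Z :: "complex mat"
  assumes Z: "psd d Z"
  shows "\<exists>K \<ge> 1. \<forall>v \<in> carrier_vec d. Re (qf (supp d Z) v) \<le> K * Re (qf Z v)"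
proof -
  have Zc: "Z \<in> carrier_mat d d" and Zh: "mat_adjoint Z = Z" using Z by (auto simp: psd_def)
  define P where "P = supp d Z"
  have P: "is_proj d P" and rP: "mat_range d P = mat_range d Z" using supp_props[OF Zc] unfolding P_def by auto
  have Pc: "P \<in> carrier_mat d d" and Ph: "mat_adjoint P = P" using P by (auto simp: is_proj_def)
  obtain M where Mc: "M \<in> carrier_mat d d" and PM: "\<And>v. v \<in> carrier_vec d \<Longrightarrow> P *\<^sub>v v = Z *\<^sub>v (M *\<^sub>v v)"
    using supp_factor[OF Zc] unfolding P_def by blast
  obtain K where K1: "K \<ge> 1" and Kb: "\<And>u. u \<in> carrier_vec d \<Longrightarrow> cmod ((M *\<^sub>v u) \<bullet>c u) \<le> K * Re (u \<bullet>c u)"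
    using qf_bound[OF Mc] by blast
  have PZ: "P *\<^sub>v (Z *\<^sub>v u) = Z *\<^sub>v u" if u: "u \<in> carrier_vec d" for u
  proof -
    have "Z *\<^sub>v u \<in> mat_range d Z" unfolding mat_range_def using u by blast
    then have "Z *\<^sub>v u \<in> mat_range d P" using rP by simp
    then show ?thesis using proj_range[OF P] by auto
  qed
  have ZP: "Z *\<^sub>v (P *\<^sub>v u) = Z *\<^sub>v u" if u: "u \<in> carrier_vec d" for u
    by (rule herm_swap'[OF Zc Zh Pc Ph PZ u])
  have "Re (qf P v) \<le> K * Re (qf Z v)" if v: "v \<in> carrier_vec d" for v
  proof -
    define u where "u = P *\<^sub>v v"
    have u: "u \<in> carrier_vec d" unfolding u_def using Pc v by simp
    have Pu: "P *\<^sub>v u = u" unfolding u_def by (rule proj_idem_vec[OF P v])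
    have uu: "u \<bullet>c u = v \<bullet>c u" unfolding u_def
      using herm_ip[OF Pc Ph v u] Pu unfolding u_def by simp
    have qP: "qf P v = u \<bullet>c u"
    proof -
      have "qf P v = u \<bullet>c v" unfolding qf_def u_def ..
      also have "\<dots> = cnj (v \<bullet>c u)" using cip_cnj[OF v u] by simp
      also have "\<dots> = cnj (u \<bullet>c u)" using uu by simp
      also have "\<dots> = u \<bullet>c u" using cip_cnj[OF u u] by simp
      finally show ?thesis .
    qed
    have Zv: "Z *\<^sub>v v \<in> carrier_vec d" using Zc v by simp
    have qZ: "qf Z u = qf Z v"
    proof -
      have "qf Z u = (Z *\<^sub>v v) \<bullet>c (P *\<^sub>v v)" unfolding qf_def using ZP[OF v] unfolding u_def by simp
      also have "\<dots> = (P *\<^sub>v (Z *\<^sub>v v)) \<bullet>c v" using herm_ip[OF Pc Ph Zv v] by simp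
      also have "\<dots> = qf Z v" unfolding qf_def using PZ[OF v] by simp
      finally show ?thesis .
    qed
    define m where "m = M *\<^sub>v u"
    have m: "m \<in> carrier_vec d" unfolding m_def using Mc u by simp
    have Zm: "Z *\<^sub>v m = u" unfolding m_def using PM[OF u] Pu by simp
    define N where "N = Re (u \<bullet>c u)"
    define q where "q = Re (qf Z v)"
    have e1: "(Z *\<^sub>v m) \<bullet>c u = u \<bullet>c u" using Zm by simp
    have e2: "(Z *\<^sub>v u) \<bullet>c m = u \<bullet>c u" using herm_ip[OF Zc Zh u m] Zm by simp
    have e3: "Re (qf Z m) \<le> K * N"
    proof -
      have "qf Z m = u \<bullet>c m" unfolding qf_def using Zm by simp
      also have "\<dots> = cnj ((M *\<^sub>v u) \<bullet>c u)" unfolding m_def using cip_cnj[OF m u] unfolding m_def by simp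
      finally have "Re (qf Z m) \<le> cmod ((M *\<^sub>v u) \<bullet>c u)"
        by (metis complex_Re_le_cmod complex_mod_cnj)
      also have "\<dots> \<le> K * N" unfolding N_def by (rule Kb[OF u])
      finally show ?thesis .
    qed
    have "0 \<le> Re (qf Z (m + complex_of_real (- K) \<cdot>\<^sub>v u))" using psd_qf[OF Z] m u by simp
    also have "\<dots> = Re (qf Z m) - 2 * K * N + K * K * q"
      unfolding qf_expand[OF Zc m u] e1 e2 qZ N_def q_def by simp
    also have "\<dots> \<le> K * N - 2 * K * N + K * K * q" using e3 by simp
    finally have "K * N \<le> K * (K * q)" by (simp add: algebra_simps)
    then have "N \<le> K * q" using K1 by simp
    then show ?thesis unfolding N_def q_def using qP by simp
  qed
  then show ?thesis unfolding P_def using K1 by blast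
qed

lemma range_dom:
  fixes Y Z :: "complex mat"
  assumes Y: "psd d Y" and Z: "psd d Z" and sub: "mat_range d Y \<subseteq> mat_range d Z"
  shows "\<exists>c \<ge> 0. psd d (complex_of_real c \<cdot>\<^sub>m Z - Y)"
proof -
  have Zc: "Z \<in> carrier_mat d d" and Zh: "mat_adjoint Z = Z" using Z by (auto simp: psd_def)
  have Yc: "Y \<in> carrier_mat d d" and Yh: "mat_adjoint Y = Y" using Y by (auto simp: psd_def)
  define P where "P = supp d Z"
  have P: "is_proj d P" and rP: "mat_range d P = mat_range d Z" using supp_props[OF Zc] unfolding P_def by auto
  have Pc: "P \<in> carrier_mat d d" and Ph: "mat_adjoint P = P" using P by (auto simp: is_proj_def)
  obtain K where K1: "K \<ge> 1" and KP: "\<And>v. v \<in> carrier_vec d \<Longrightarrow> Re (qf P v) \<le> K * Re (qf Z v)"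
    using proj_dom[OF Z] unfolding P_def by blast
  obtain L where L1: "L \<ge> 1" and Lb: "\<And>u. u \<in> carrier_vec d \<Longrightarrow> cmod ((Y *\<^sub>v u) \<bullet>c u) \<le> L * Re (u \<bullet>c u)"
    using qf_bound[OF Yc] by blast
  have PY: "P *\<^sub>v (Y *\<^sub>v u) = Y *\<^sub>v u" if u: "u \<in> carrier_vec d" for u
  proof -
    have "Y *\<^sub>v u \<in> mat_range d Y" unfolding mat_range_def using u by blast
    then have "Y *\<^sub>v u \<in> mat_range d P" using rP sub by auto
    then show ?thesis using proj_range[OF P] by auto
  qed
  have YP: "Y *\<^sub>v (P *\<^sub>v u) = Y *\<^sub>v u" if u: "u \<in> carrier_vec d" for u
    by (rule herm_swap'[OF Yc Yh Pc Ph PY u])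
  have bnd: "Re (qf Y v) \<le> (L * K) * Re (qf Z v)" if v: "v \<in> carrier_vec d" for v
  proof -
    define u where "u = P *\<^sub>v v"
    have u: "u \<in> carrier_vec d" unfolding u_def using Pc v by simp
    have Yv: "Y *\<^sub>v v \<in> carrier_vec d" using Yc v by simp
    have qY: "qf Y u = qf Y v"
    proof -
      have "qf Y u = (Y *\<^sub>v v) \<bullet>c (P *\<^sub>v v)" unfolding qf_def using YP[OF v] unfolding u_def by simp
      also have "\<dots> = (P *\<^sub>v (Y *\<^sub>v v)) \<bullet>c v" using herm_ip[OF Pc Ph Yv v] by simp
      also have "\<dots> = qf Y v" unfolding qf_def using PY[OF v] by simp
      finally show ?thesis .
    qed
    have uu: "Re (u \<bullet>c u) = Re (qf P v)"
    proof -
      have "u \<bullet>c u = v \<bullet>c (P *\<^sub>v u)" unfolding u_def by (rule herm_ip[OF Pc Ph v]) (use Pc v in simp)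
      also have "P *\<^sub>v u = u" unfolding u_def by (rule proj_idem_vec[OF P v])
      also have "v \<bullet>c u = cnj (qf P v)" unfolding qf_def u_def using cip_cnj[OF u v] unfolding u_def by simp
      finally show ?thesis by simp
    qed
    have "Re (qf Y v) = Re (qf Y u)" using qY by simp
    also have "\<dots> \<le> cmod (qf Y u)" by (rule complex_Re_le_cmod)
    also have "\<dots> \<le> L * Re (u \<bullet>c u)" unfolding qf_def by (rule Lb[OF u])
    also have "\<dots> = L * Re (qf P v)" using uu by simp
    also have "\<dots> \<le> L * (K * Re (qf Z v))" using KP[OF v] L1 by (intro mult_left_mono) auto
    finally show ?thesis by (simp add: algebra_simps)
  qed
  have cZ: "complex_of_real (L * K) \<cdot>\<^sub>m Z \<in> carrier_mat d d" using Zc by simp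
  have "psd d (complex_of_real (L * K) \<cdot>\<^sub>m Z - Y)"
    unfolding psd_def
  proof (intro conjI ballI)
    show "complex_of_real (L * K) \<cdot>\<^sub>m Z - Y \<in> carrier_mat d d" by (rule minus_carrier_mat[OF Yc])
    show "mat_adjoint (complex_of_real (L * K) \<cdot>\<^sub>m Z - Y) = complex_of_real (L * K) \<cdot>\<^sub>m Z - Y"
      using adjoint_minus[OF cZ Yc] adjoint_smult_real[OF Zc, of "L * K"] Zh Yh by (simp del: of_real_mult)
    fix v :: "complex vec" assume v: "v \<in> carrier_vec d"
    have "Re (qf (complex_of_real (L * K) \<cdot>\<^sub>m Z - Y) v) = (L * K) * Re (qf Z v) - Re (qf Y v)"
      using qf_minus[OF cZ Yc v] qf_smult[OF Zc v] by simp
    then show "0 \<le> Re (((complex_of_real (L * K) \<cdot>\<^sub>m Z - Y) *\<^sub>v v) \<bullet>c v)"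
      using bnd[OF v] unfolding qf_def by simp
  qed
  then show ?thesis using K1 L1 by (intro exI[of _ "L * K"]) auto
qed

lemma pos_range_mono:
  assumes T: "positive_map d T" and Y: "psd d Y" and Z: "psd d Z" and sub: "mat_range d Y \<subseteq> mat_range d Z"
  shows "mat_range d (T Y) \<subseteq> mat_range d (T Z)"
proof -
  obtain c where c0: "c \<ge> 0" and c: "psd d (complex_of_real c \<cdot>\<^sub>m Z - Y)" using range_dom[OF Y Z sub] by blast
  have Zc: "Z \<in> carrier_mat d d" and Yc: "Y \<in> carrier_mat d d" using Y Z by (auto simp: psd_def)
  have cZ: "complex_of_real c \<cdot>\<^sub>m Z \<in> carrier_mat d d" using Zc by simp
  have "T (complex_of_real c \<cdot>\<^sub>m Z - Y) = complex_of_real c \<cdot>\<^sub>m T Z - T Y"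
    using lm_minus[OF pos_lin[OF T] cZ Yc] lm_smult[OF pos_lin[OF T] Zc] by simp
  then have "psd d (complex_of_real c \<cdot>\<^sub>m T Z - T Y)" using pos_psd[OF T c] by simp
  then show ?thesis by (rule psd_dom_range[OF pos_psd[OF T Y] pos_psd[OF T Z]])
qed

lemma range_zero_mat: "mat_range d Y \<subseteq> {0\<^sub>v d} \<Longrightarrow> Y \<in> carrier_mat d d \<Longrightarrow> Y = (0\<^sub>m d d :: complex mat)"
  by (rule mat_eq_vec[of _ d]) (auto simp: mat_range_def)

context stp
begin

lemma x_zero_after:
  assumes xn: "x n = 0\<^sub>m d d" and k: "k \<ge> n"
  shows "x k = 0\<^sub>m d d"
proof -
  obtain j where kj: "k = j + n" using k le_Suc_ex by (metis add.commute)
  have "x k = (T ^^ j) (x n)" unfolding x_def kj funpow_add by simp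
  then show ?thesis using xn lm_zero[OF lin_map_pow[OF lin]] by simp
qed

definition R where "R n k = msum d (\<lambda>j. x (k + j)) n"

lemma R_psd: "psd d (R n k)" unfolding R_def by (rule msum_psd) (rule x_psd)
lemma R_carrier: "R n k \<in> carrier_mat d d" using psd_carrier[OF R_psd] .

lemma R_T: "T (R n k) = R n (Suc k)"
  unfolding R_def by (subst msum_lin[OF lin]) (auto simp: x_carrier x_Suc)

lemma R_pow: "(T ^^ j) (R n k) = R n (k + j)"
  by (induction j) (auto simp: R_T)

lemma R_split:
  assumes xn: "x n = 0\<^sub>m d d" and n: "n \<ge> 1"
  shows "R n k = x k + R n (Suc k)"
proof -
  obtain m where nm: "n = Suc m" using n by (cases n) auto
  have "R n k = x k + msum d (\<lambda>j. x (k + Suc j)) m"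
    unfolding R_def nm by (subst msum_shift) (auto simp: x_carrier)
  moreover have "R n (Suc k) = msum d (\<lambda>j. x (k + Suc j)) m"
  proof -
    have "x (Suc k + m) = 0\<^sub>m d d" using x_zero_after[OF xn] nm by simp
    moreover have "msum d (\<lambda>j. x (k + Suc j)) m \<in> carrier_mat d d" by (rule msum_carrier) (rule x_carrier)
    ultimately show ?thesis unfolding R_def nm by simp
  qed
  ultimately show ?thesis by simp
qed

lemma R_end: "x n = 0\<^sub>m d d \<Longrightarrow> R n n = 0\<^sub>m d d"
  unfolding R_def by (rule msum_zero) (auto intro: x_zero_after)

lemma R_last: "x n = 0\<^sub>m d d \<Longrightarrow> n \<ge> 1 \<Longrightarrow> R n (n - 1) = x (n - 1)"
  using R_split[of n "n - 1"] R_end[of n] x_carrier[of "n - 1"] by simp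

lemma R_range_mono:
  assumes xn: "x n = 0\<^sub>m d d" and n: "n \<ge> 1"
  shows "mat_range d (R n (Suc k)) \<subseteq> mat_range d (R n k)"
proof -
  have "complex_of_real 1 \<cdot>\<^sub>m R n k - R n (Suc k) = x k"
    unfolding R_split[OF xn n, of k] using x_carrier[of k] R_carrier[of n "Suc k"] by (intro eq_matI) auto
  then have "psd d (complex_of_real 1 \<cdot>\<^sub>m R n k - R n (Suc k))" using x_psd by simp
  then show ?thesis by (rule psd_dom_range[OF R_psd R_psd])
qed

lemma R_range_strict:
  assumes xn: "x n = 0\<^sub>m d d" and n: "n \<ge> 1" and xl: "x (n - 1) \<noteq> 0\<^sub>m d d" and k: "k < n"
  shows "\<not> mat_range d (R n k) \<subseteq> mat_range d (R n (Suc k))"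
proof
  assume sub: "mat_range d (R n k) \<subseteq> mat_range d (R n (Suc k))"
  define j where "j = n - 1 - k"
  have "mat_range d ((T ^^ j) (R n k)) \<subseteq> mat_range d ((T ^^ j) (R n (Suc k)))"
    by (rule pos_range_mono[OF pos_pow[OF pos] R_psd R_psd sub])
  moreover have "k + j = n - 1" "Suc k + j = n" unfolding j_def using k by auto
  ultimately have "mat_range d (R n (n - 1)) \<subseteq> mat_range d (R n n)" unfolding R_pow by metis
  then have "mat_range d (x (n - 1)) \<subseteq> {0\<^sub>v d}" unfolding R_last[OF xn n] R_end[OF xn] range_zero .
  then have "x (n - 1) = 0\<^sub>m d d" using range_zero_mat x_carrier by blast
  with xl show False by simp
qed

end

context vec_space
begin

lemma range_submodule:
  assumes X: "X \<in> carrier_mat n n"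
  shows "submodule class_ring {X *\<^sub>v w | w. w \<in> carrier_vec n} V"
proof (unfold_locales)
  show "{X *\<^sub>v w | w. w \<in> carrier_vec n} \<subseteq> carrier V" using X by auto
  fix v w assume "v \<in> {X *\<^sub>v w | w. w \<in> carrier_vec n}" "w \<in> {X *\<^sub>v w | w. w \<in> carrier_vec n}"
  then obtain a b where ab: "v = X *\<^sub>v a" "w = X *\<^sub>v b" "a \<in> carrier_vec n" "b \<in> carrier_vec n" by auto
  then have "v \<oplus>\<^bsub>V\<^esub> w = X *\<^sub>v (a + b)" using X by (simp add: mult_add_distrib_mat_vec)
  then show "v \<oplus>\<^bsub>V\<^esub> w \<in> {X *\<^sub>v w | w. w \<in> carrier_vec n}" using ab by auto
next
  have "\<zero>\<^bsub>V\<^esub> = X *\<^sub>v 0\<^sub>v n" using X by (intro eq_vecI) (auto simp: scalar_prod_def)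
  then show "\<zero>\<^bsub>V\<^esub> \<in> {X *\<^sub>v w | w. w \<in> carrier_vec n}" by auto
next
  fix c :: 'a and v assume "c \<in> carrier class_ring" "v \<in> {X *\<^sub>v w | w. w \<in> carrier_vec n}"
  then obtain a where a: "v = X *\<^sub>v a" "a \<in> carrier_vec n" by auto
  then have "c \<odot>\<^bsub>V\<^esub> v = X *\<^sub>v (c \<cdot>\<^sub>v a)" using X by (simp add: mult_mat_vec)
  then show "c \<odot>\<^bsub>V\<^esub> v \<in> {X *\<^sub>v w | w. w \<in> carrier_vec n}" using a by auto
qed

lemma range_in_span_cols:
  assumes X: "X \<in> carrier_mat n n" and S: "S \<subseteq> carrier_vec n" and cols: "set (cols X) \<subseteq> span S"
    and w: "w \<in> carrier_vec n"
  shows "X *\<^sub>v w \<in> span S"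
proof -
  have sub: "submodule class_ring (span S) V" using span_is_submodule[OF S] .
  define ps where "ps k = X *\<^sub>v vec n (\<lambda>j. if j < k then w $ j else 0)" for k
  have psin: "ps k \<in> span S" if "k \<le> n" for k
    using that
  proof (induction k)
    case 0
    have "ps 0 = 0\<^sub>v n" unfolding ps_def using X by (intro eq_vecI) (auto simp: scalar_prod_def)
    then show ?case using submodule.zero_closed[OF sub] by simp
  next
    case (Suc k)
    then have k: "k < n" by simp
    have e: "vec n (\<lambda>j. if j < Suc k then w $ j else 0) = vec n (\<lambda>j. if j < k then w $ j else 0) + (w $ k) \<cdot>\<^sub>v unit_vec n k"
      by (intro eq_vecI) (auto simp: unit_vec_def less_Suc_eq)
    have "ps (Suc k) = ps k + (w $ k) \<cdot>\<^sub>v (X *\<^sub>v unit_vec n k)"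
      unfolding ps_def e using X by (simp add: mult_add_distrib_mat_vec mult_mat_vec)
    moreover have "X *\<^sub>v unit_vec n k = col X k" using X k by (intro eq_vecI) auto
    moreover have "col X k \<in> span S" using cols k X by (auto simp: cols_def)
    ultimately show ?case using Suc submodule.m_closed[OF sub] submodule.smult_closed[OF sub] by simp
  qed
  have psn: "ps n = X *\<^sub>v w" unfolding ps_def using w by (intro arg_cong[of _ _ "\<lambda>v. X *\<^sub>v v"] eq_vecI) auto
  show ?thesis using psin[of n] psn by simp
qed

lemma rank_ge_indpt:
  assumes X: "X \<in> carrier_mat n n" and Vs: "Vs \<subseteq> {X *\<^sub>v w | w. w \<in> carrier_vec n}"
    and fin: "finite Vs" and li: "lin_indpt Vs"
  shows "card Vs \<le> rank X"
proof -
  obtain S where S: "maximal S (\<lambda>T. T \<subseteq> set (cols X) \<and> lin_indpt T)"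
    using maximal_exists[of "(\<lambda>T. T \<subseteq> set (cols X) \<and> lin_indpt T)" "card (set (cols X))" "{}"]
    by (meson List.finite_set card_mono empty_iff empty_subsetI finite_lin_indpt2 rev_finite_subset)
  have rk: "rank X = card S" by (rule rank_card_indpt[OF X S])
  have Scols: "S \<subseteq> set (cols X)" and Sli: "lin_indpt S" using S unfolding maximal_def by simp_all
  have Smax: "\<And>B. S \<subseteq> B \<Longrightarrow> B \<subseteq> set (cols X) \<Longrightarrow> lin_indpt B \<Longrightarrow> B = S"
    using S unfolding maximal_def by blast
  have colsC: "set (cols X) \<subseteq> carrier_vec n"
  proof
    fix c assume "c \<in> set (cols X)"
    then obtain j where "j < length (cols X)" "c = cols X ! j" by (metis in_set_conv_nth)
    then show "c \<in> carrier_vec n" using X by simp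
  qed
  have SC: "S \<subseteq> carrier_vec n" using Scols colsC by (rule order_trans)
  have finS: "finite S" using Scols finite_subset by blast
  have colspan: "set (cols X) \<subseteq> span S"
  proof
    fix c assume c: "c \<in> set (cols X)"
    have cC: "c \<in> carrier_vec n" using c colsC by blast
    show "c \<in> span S"
    proof (cases "c \<in> S")
      case True then show ?thesis using in_own_span[OF SC] by blast
    next
      case False
      have "lin_dep (S \<union> {c})"
      proof (rule ccontr)
        assume a: "\<not> lin_dep (S \<union> {c})"
        have "S \<union> {c} = S" by (rule Smax) (use Scols c a in auto)
        then show False using False by blast
      qed
      then show ?thesis using lin_dep_iff_in_span[OF SC Sli cC False] by simp
    qed
  qed
  have "Vs \<subseteq> span S"
  proof
    fix y assume "y \<in> Vs"
    then obtain w where w: "y = X *\<^sub>v w" "w \<in> carrier_vec n" using Vs by blast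
    show "y \<in> span S" unfolding w(1) by (rule range_in_span_cols[OF X SC colspan w(2)])
  qed
  from replacement[OF fin finS SC li this]
  have "int (card Vs) \<le> int (card S)" by (elim exE conjE) linarith
  then show ?thesis using rk by linarith
qed

lemma chain_indpt:
  fixes W :: "nat \<Rightarrow> 'a vec set" and v :: "nat \<Rightarrow> 'a vec"
  assumes sub: "\<And>k. k \<le> m \<Longrightarrow> submodule class_ring (W k) V"
    and mono: "\<And>k. k < m \<Longrightarrow> W (Suc k) \<subseteq> W k"
    and vin: "\<And>k. k < m \<Longrightarrow> v k \<in> W k" and vout: "\<And>k. k < m \<Longrightarrow> v k \<notin> W (Suc k)"
  shows "lin_indpt (v ` {..<m}) \<and> card (v ` {..<m}) = m"
proof -
  have WC: "W k \<subseteq> carrier_vec n" if "k \<le> m" for k using submodule.subset[OF sub[OF that]] by simp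
  have mono': "W j \<subseteq> W i" if "i \<le> j" "j \<le> m" for i j
    using that
  proof (induction j rule: dec_induct)
    case base then show ?case by simp
  next
    case (step j) then show ?case using mono[of j] by auto
  qed
  have P: "lin_indpt (v ` {k..<m}) \<and> v ` {k..<m} \<subseteq> W k" if "k \<le> m" for k
    using that
  proof (induction k rule: inc_induct)
    case base
    have "lin_indpt {}" unfolding lin_dep_def by auto
    then show ?case by simp
  next
    case (step k)
    then have k: "k < m" by simp
    let ?S = "v ` {Suc k..<m}"
    have IH: "lin_indpt ?S" "?S \<subseteq> W (Suc k)" using step by auto
    have ins: "v ` {k..<m} = ?S \<union> {v k}"
    proof -
      have "{k..<m} = insert k {Suc k..<m}" using k by auto
      then show ?thesis by auto
    qed
    have SC: "?S \<subseteq> carrier_vec n" using IH(2) WC[of "Suc k"] k by auto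
    have vkC: "v k \<in> carrier_vec n" using vin[OF k] WC[of k] k by auto
    have vkS: "v k \<notin> ?S" using IH(2) vout[OF k] by auto
    have "span ?S \<subseteq> W (Suc k)" by (rule span_is_subset[OF IH(2) sub]) (use k in simp)
    then have "v k \<notin> span ?S" using vout[OF k] by auto
    then have "lin_indpt (?S \<union> {v k})" using lin_dep_iff_in_span[OF SC IH(1) vkC vkS] by simp
    moreover have "?S \<union> {v k} \<subseteq> W k" using IH(2) mono[OF k] vin[OF k] by auto
    ultimately show ?case using ins by simp
  qed
  have inj: "inj_on v {..<m}"
  proof (rule inj_onI)
    fix i j assume i: "i \<in> {..<m}" and j: "j \<in> {..<m}" and eq: "v i = v j"
    show "i = j"
    proof (rule ccontr)
      assume "i \<noteq> j"
      then consider "i < j" | "j < i" by linarith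
      then show False
      proof cases
        case 1
        then have "v j \<in> W (Suc i)" using vin[of j] j mono'[of "Suc i" j] by auto
        then show False using vout[of i] i eq by auto
      next
        case 2
        then have "v i \<in> W (Suc j)" using vin[of i] i mono'[of "Suc j" i] by auto
        then show False using vout[of j] j eq by auto
      qed
    qed
  qed
  have "lin_indpt (v ` {0..<m})" using P[of 0] by simp
  then show ?thesis using card_image[OF inj] by (simp add: atLeast0LessThan)
qed

end

lemma msum_minus_psd:
  assumes f: "\<And>i. i < n \<Longrightarrow> psd d (f i)" and k: "k < n"
  shows "psd d (msum d f n - f k)"
proof -
  have fc: "\<And>i. i < n \<Longrightarrow> f i \<in> carrier_mat d d" using f psd_carrier by blast
  have Mc: "msum d f n \<in> carrier_mat d d" by (rule msum_carrier[OF fc])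
  have Mh: "mat_adjoint (msum d f n) = msum d f n" using psd_herm[OF msum_psd[OF f]] by simp
  have fkc: "f k \<in> carrier_mat d d" using fc k by simp
  show ?thesis unfolding psd_def
  proof (intro conjI ballI)
    show "msum d f n - f k \<in> carrier_mat d d" by (rule minus_carrier_mat[OF fkc])
    show "mat_adjoint (msum d f n - f k) = msum d f n - f k"
      using adjoint_minus[OF Mc fkc] Mh psd_herm[OF f[OF k]] by simp
    fix v :: "complex vec" assume v: "v \<in> carrier_vec d"
    have "Re (qf (msum d f n - f k) v) = (\<Sum>i<n. Re (qf (f i) v)) - Re (qf (f k) v)"
      using qf_minus[OF Mc fkc v] msum_qf[of n f d v, OF fc v] by simp
    also have "\<dots> \<ge> 0"
      using member_le_sum[of k "{..<n}" "\<lambda>i. Re (qf (f i) v)"] k psd_qf[OF f v] by auto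
    finally show "0 \<le> Re (((msum d f n - f k) *\<^sub>v v) \<bullet>c v)" unfolding qf_def .
  qed
qed

lemma msum_fix:
  assumes fc: "\<And>i. i < m \<Longrightarrow> f i \<in> carrier_mat d d" and R: "R \<in> carrier_mat d d" and w: "w \<in> carrier_vec d"
    and h: "\<And>i u. i < m \<Longrightarrow> u \<in> carrier_vec d \<Longrightarrow> R *\<^sub>v (f i *\<^sub>v u) = f i *\<^sub>v u"
  shows "R *\<^sub>v (msum d f m *\<^sub>v w) = msum d f m *\<^sub>v w"
  using fc h
proof (induction m)
  case 0 then show ?case using R w by (simp add: mat_vec_zero_r)
next
  case (Suc m)
  have c: "msum d f m \<in> carrier_mat d d" "f m \<in> carrier_mat d d" using Suc.prems by (auto intro!: msum_carrier)
  have "msum d f (Suc m) *\<^sub>v w = msum d f m *\<^sub>v w + f m *\<^sub>v w"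
    using add_mult_distrib_mat_vec[OF c w] by simp
  moreover have "R *\<^sub>v (msum d f m *\<^sub>v w + f m *\<^sub>v w) = R *\<^sub>v (msum d f m *\<^sub>v w) + R *\<^sub>v (f m *\<^sub>v w)"
    using mult_add_distrib_mat_vec[OF R] c w by simp
  moreover have "R *\<^sub>v (f m *\<^sub>v w) = f m *\<^sub>v w" using Suc.prems(2)[of m w] w by simp
  ultimately show ?case using Suc by simp
qed

lemma join_is_supp:
  assumes f: "\<And>i. i < n \<Longrightarrow> psd d (f i)"
  shows "proj_join d {supp d (f k) | k. k < n} = supp d (msum d f n)"
proof -
  have fc: "\<And>i. i < n \<Longrightarrow> f i \<in> carrier_mat d d" using f psd_carrier by blast
  define R0 where "R0 = msum d f n"
  have R0: "psd d R0" unfolding R0_def by (rule msum_psd[OF f])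
  have R0c: "R0 \<in> carrier_mat d d" using psd_carrier[OF R0] .
  define Q where "Q = supp d R0"
  have Q: "is_proj d Q" and rQ: "mat_range d Q = mat_range d R0" using supp_props[OF R0c] unfolding Q_def by auto
  let ?S = "{supp d (f k) | k. k < n}"
  have rf: "mat_range d (f k) \<subseteq> mat_range d R0" if k: "k < n" for k
  proof (rule psd_dom_range[OF f[OF k] R0, of 1])
    have "complex_of_real 1 \<cdot>\<^sub>m R0 = R0" using R0c by (intro eq_matI) auto
    then show "psd d (complex_of_real 1 \<cdot>\<^sub>m R0 - f k)" unfolding R0_def using msum_minus_psd[OF f k] by simp
  qed
  have ub: "\<forall>P \<in> ?S. loewner_le d P Q"
  proof
    fix P assume "P \<in> ?S"
    then obtain k where k: "k < n" and P: "P = supp d (f k)" by auto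
    have sp: "is_proj d P" "mat_range d P = mat_range d (f k)" using supp_props[OF fc[OF k]] P by auto
    show "loewner_le d P Q" by (rule proj_sub_range[OF sp(1) Q]) (use sp(2) rf[OF k] rQ in auto)
  qed
  have least: "loewner_le d Q R" if R: "is_proj d R" and Rub: "\<forall>P \<in> ?S. loewner_le d P R" for R
  proof -
    have Rc: "R \<in> carrier_mat d d" using R by (simp add: is_proj_def)
    have h: "R *\<^sub>v (f i *\<^sub>v u) = f i *\<^sub>v u" if i: "i < n" and u: "u \<in> carrier_vec d" for i u
    proof -
      have sp: "is_proj d (supp d (f i))" "mat_range d (supp d (f i)) = mat_range d (f i)"
        using supp_props[OF fc[OF i]] by auto
      have "loewner_le d (supp d (f i)) R" using Rub i by auto
      then have "mat_range d (f i) \<subseteq> mat_range d R" using proj_le_range[OF sp(1) R] sp(2) by simp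
      moreover have "f i *\<^sub>v u \<in> mat_range d (f i)" unfolding mat_range_def using u by blast
      ultimately show ?thesis using proj_range[OF R] by auto
    qed
    have "mat_range d R0 \<subseteq> mat_range d R"
    proof
      fix y assume "y \<in> mat_range d R0"
      then obtain w where w: "w \<in> carrier_vec d" "y = R0 *\<^sub>v w" unfolding mat_range_def by auto
      have "R *\<^sub>v y = y" unfolding w(2) R0_def by (rule msum_fix[OF fc Rc w(1) h])
      then show "y \<in> mat_range d R" using proj_range[OF R] w R0c by auto
    qed
    then show ?thesis using proj_sub_range[OF Q R] rQ by simp
  qed
  have "(THE Q. is_proj d Q \<and> (\<forall>P \<in> ?S. loewner_le d P Q) \<and>
      (\<forall>R. is_proj d R \<and> (\<forall>P \<in> ?S. loewner_le d P R) \<longrightarrow> loewner_le d Q R)) = Q"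
  proof (rule the_equality)
    show "is_proj d Q \<and> (\<forall>P \<in> ?S. loewner_le d P Q) \<and>
      (\<forall>R. is_proj d R \<and> (\<forall>P \<in> ?S. loewner_le d P R) \<longrightarrow> loewner_le d Q R)"
      using Q ub least by blast
    fix Q' assume Q': "is_proj d Q' \<and> (\<forall>P \<in> ?S. loewner_le d P Q') \<and>
      (\<forall>R. is_proj d R \<and> (\<forall>P \<in> ?S. loewner_le d P R) \<longrightarrow> loewner_le d Q' R)"
    have "loewner_le d Q' Q" using Q' Q ub by blast
    moreover have "loewner_le d Q Q'" using least Q' by blast
    ultimately have "mat_range d Q' = mat_range d Q"
      using proj_le_range[OF _ Q] proj_le_range[OF Q] Q' by blast
    then show "Q' = Q" using proj_unique[of d Q' Q] Q Q' by blast
  qed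
  then show ?thesis unfolding proj_join_def Q_def R0_def .
qed

theorem theorem8p9:
  fixes d :: nat
    and T :: "complex mat \<Rightarrow> complex mat"
    and A :: "(complex mat \<Rightarrow> complex mat) set"
  assumes "d \<ge> 1"
    and "completely_positive d T"
    and "subunital d T"
    and "finite A"
    and "T \<in> A"
    and "\<forall>S \<in> A. positive_map d S \<and> subunital d S"
    and "comp_closed d A"
  shows "(\<exists>n \<ge> 1. (T ^^ n) (defect d T) = 0\<^sub>m d d) \<and> stab_index d T \<le> d \<and>
    (let n = stab_index d T;
         Q = proj_join d {supp d ((T ^^ k) (defect d T)) | k. k < n};
         s = mrank d Q
     in s \<le> d \<and> (defect d T \<noteq> 0\<^sub>m d d \<longrightarrow> n \<le> s))"
proof -
  have posT: "positive_map d T" using assms(5,6) by blast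
  interpret stp d T by unfold_locales (use posT assms(3) in auto)
  have xe: "(T ^^ k) (defect d T) = x k" for k unfolding x_def D_def ..
  obtain a p where a1: "a \<ge> 1" and p1: "p \<ge> 1" and per: "\<forall>X\<in>carrier_mat d d. (T ^^ (a + p)) X = (T ^^ a) X"
    using finite_period[OF assms(4,5,7)] by blast
  have xa: "x a = 0\<^sub>m d d" by (rule eventually_zero[OF per p1]) simp
  have ex: "\<exists>n \<ge> 1. x n = 0\<^sub>m d d" using xa a1 by blast
  define n where "n = stab_index d T"
  have n_def': "n = (LEAST n. n \<ge> 1 \<and> x n = 0\<^sub>m d d)" unfolding n_def stab_index_def xe ..
  have n1: "n \<ge> 1" and xn: "x n = 0\<^sub>m d d"
    using LeastI_ex[OF ex] unfolding n_def'[symmetric] by auto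
  have nmin: "\<And>k. k \<ge> 1 \<Longrightarrow> x k = 0\<^sub>m d d \<Longrightarrow> n \<le> k"
    unfolding n_def' by (rule Least_le) simp
  define Q where "Q = proj_join d {supp d (x k) | k. k < n}"
  have R0: "msum d x n = R n 0" unfolding R_def by simp
  have Qs: "Q = supp d (R n 0)" unfolding Q_def R0[symmetric] by (rule join_is_supp) (rule x_psd)
  have Qp: "is_proj d Q" and rQ: "mat_range d Q = mat_range d (R n 0)"
    using supp_props[OF R_carrier] unfolding Qs by auto
  have Qc: "Q \<in> carrier_mat d d" using Qp by (simp add: is_proj_def)
  interpret VS: vec_space "TYPE(complex)" d .
  have s_le: "mrank d Q \<le> d" unfolding mrank_def by (rule VS.rank_le_nc[OF Qc])
  have n_le_s: "n \<le> mrank d Q" if D0: "defect d T \<noteq> 0\<^sub>m d d"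
  proof -
    have xl: "x (n - 1) \<noteq> 0\<^sub>m d d"
    proof (cases "n - 1 = 0")
      case True then show ?thesis using D0 unfolding x_def D_def by simp
    next
      case False
      show ?thesis
      proof
        assume "x (n - 1) = 0\<^sub>m d d"
        then have "n \<le> n - 1" using nmin[of "n - 1"] False by simp
        then show False using n1 by simp
      qed
    qed
    define W where "W k = mat_range d (R n k)" for k
    have Wdef: "W k = {R n k *\<^sub>v w | w. w \<in> carrier_vec d}" for k unfolding W_def mat_range_def ..
    have ex_v: "\<exists>v. v \<in> W k \<and> v \<notin> W (Suc k)" if k: "k < n" for k
      using R_range_strict[OF xn n1 xl k] unfolding W_def by blast
    define v where "v k = (SOME v. v \<in> W k \<and> v \<notin> W (Suc k))" for k
    have v: "v k \<in> W k \<and> v k \<notin> W (Suc k)" if "k < n" for k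
      unfolding v_def by (rule someI_ex[OF ex_v[OF that]])
    have mono: "W (Suc k) \<subseteq> W k" for k unfolding W_def by (rule R_range_mono[OF xn n1])
    have mono0: "W k \<subseteq> W 0" for k
    proof (induction k)
      case 0 then show ?case by simp
    next
      case (Suc k) then show ?case using mono[of k] by auto
    qed
    have ch: "VS.lin_indpt (v ` {..<n}) \<and> card (v ` {..<n}) = n"
    proof (rule VS.chain_indpt[of n W v])
      show "\<And>k. k \<le> n \<Longrightarrow> submodule class_ring (W k) VS.V"
        unfolding Wdef by (rule VS.range_submodule[OF R_carrier])
    qed (use mono v in auto)
    have sub: "v ` {..<n} \<subseteq> {Q *\<^sub>v w | w. w \<in> carrier_vec d}"
    proof -
      have "v ` {..<n} \<subseteq> W 0" using v mono0 by blast
      also have "W 0 = {Q *\<^sub>v w | w. w \<in> carrier_vec d}" using rQ unfolding W_def mat_range_def by simp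
      finally show ?thesis .
    qed
    have "card (v ` {..<n}) \<le> VS.rank Q"
      by (rule VS.rank_ge_indpt[OF Qc sub]) (use ch in auto)
    then show ?thesis using ch unfolding mrank_def by simp
  qed
  have n_le_d: "n \<le> d"
  proof (cases "defect d T = 0\<^sub>m d d")
    case True
    have "x 1 = 0\<^sub>m d d" using True lm_zero[OF lin] unfolding x_def D_def by simp
    then have "n \<le> 1" using nmin by simp
    then show ?thesis using assms(1) by simp
  next
    case False then show ?thesis using n_le_s s_le by simp
  qed
  show ?thesis
    unfolding Let_def xe using ex n_le_d s_le n_le_s unfolding n_def Q_def by auto
qed

end
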